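(* Let $r_1,r_2,r_3>0$ with $r_2>\max(r_1,r_3)$. For $L>0$, let $m(y)=r_1\mathbf 1_{y<0}+r_2\mathbf 1_{0\le y<1}+r_3\mathbf 1_{y\ge1}$ and let $\lambda_1(L)=\sup\{\lambda : \exists\,\varphi\in W^{2,1}_{\mathrm{loc}}(\mathbb{R}),\ \varphi>0,\ L^{-2}\varphi''+(m+\lambda)\varphi\le0\}$. Let $\underline{L}=0$ if $r_1=r_3$ and $\underline{L}=\frac{1}{\sqrt{r_2-\max(r_1,r_3)}}\operatorname{arccot}\big(\sqrt{\frac{r_2-\max(r_1,r_3)}{|r_1-r_3|}}\big)$ if $r_1\ne r_3$ ($\operatorname{arccot}$ the inverse of $\cot|_{(0,\pi)}$). Then the map $L\in(0,+\infty)\mapsto\lambda_1(L)$ is continuous, constant on $(0,\underline{L}]$ (possibly empty), decreasing on $(\underline{L},+\infty)$, and satisfies: $\lambda_1(L)\to-\max(r_1,r_3)$ as $L\to\underline{L}^+$; $\lambda_1\Big(\frac\pi2\sqrt{\frac{2r_2-r_1-r_3}{(r_2-r_1)(r_2-r_3)}}\Big)=-\frac{r_2^2-r_1r_3}{2r_2-r_1-r_3}$; and $\lambda_1(L)\to-r_2$ as $L\to+\infty$. *)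

theory Defs
  imports "HOL-Analysis.Analysis"
begin

definition mfun :: "real \<Rightarrow> real \<Rightarrow> real \<Rightarrow> real \<Rightarrow> real" where
  "mfun r1 r2 r3 y = (if y < 0 then r1 else if y < 1 then r2 else r3)"

text \<open>phi is (the continuous representative of) a W^{2,1}_loc(R) function, i.e. phi is
  differentiable with derivative phi' which is locally absolutely continuous:
  phi' x = phi' 0 + integral from 0 to x of a locally integrable phi''.
  phi is positive and L^{-2} phi'' + (m + lam) phi <= 0 almost everywhere.\<close>
definition supersol :: "real \<Rightarrow> real \<Rightarrow> real \<Rightarrow> real \<Rightarrow> real \<Rightarrow> (real \<Rightarrow> real) \<Rightarrow> bool" where
  "supersol r1 r2 r3 L lam \<phi> \<longleftrightarrow>
     (\<exists>\<phi>' \<phi>''.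
        (\<forall>x. (\<phi> has_real_derivative \<phi>' x) (at x)) \<and>
        (\<forall>a b. set_integrable lborel {a..b} \<phi>'') \<and>
        (\<forall>x. \<phi>' x = \<phi>' 0 + (LBINT t=0..x. \<phi>'' t)) \<and>
        (\<forall>x. \<phi> x > 0) \<and>
        (AE y in lborel. \<phi>'' y / L\<^sup>2 + (mfun r1 r2 r3 y + lam) * \<phi> y \<le> 0))"

definition lambda1 :: "real \<Rightarrow> real \<Rightarrow> real \<Rightarrow> real \<Rightarrow> real" where
  "lambda1 r1 r2 r3 L = Sup {lam. \<exists>\<phi>. supersol r1 r2 r3 L lam \<phi>}"

definition arccot :: "real \<Rightarrow> real" where
  "arccot x = (THE y. 0 < y \<and> y < pi \<and> cot y = x)"

definition Lunder :: "real \<Rightarrow> real \<Rightarrow> real \<Rightarrow> real" where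
  "Lunder r1 r2 r3 = (if r1 = r3 then 0 else
     (1 / sqrt (r2 - max r1 r3)) * arccot (sqrt ((r2 - max r1 r3) / \<bar>r1 - r3\<bar>)))"

end

theory Submission
  imports Defs
begin


lemma deriv_split:
  fixes f g1 g2 :: "real \<Rightarrow> real"
  assumes "(g1 has_real_derivative D) (at x)" "(g2 has_real_derivative D) (at x)"
    and "\<And>y. y \<le> x \<Longrightarrow> f y = g1 y" "\<And>y. y \<ge> x \<Longrightarrow> f y = g2 y"
  shows "(f has_real_derivative D) (at x)"
proof -
  have 1: "((\<lambda>y. (g1 y - g1 x) / (y - x)) \<longlongrightarrow> D) (at_left x)"
    using assms(1) unfolding has_field_derivative_iff by (simp add: filterlim_at_split)
  have 2: "((\<lambda>y. (g2 y - g2 x) / (y - x)) \<longlongrightarrow> D) (at_right x)"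
    using assms(2) unfolding has_field_derivative_iff by (simp add: filterlim_at_split)
  have "((\<lambda>y. (f y - f x) / (y - x)) \<longlongrightarrow> D) (at_left x)"
    by (rule Lim_transform_eventually[OF 1]) (auto simp: eventually_at_filter assms(3))
  moreover have "((\<lambda>y. (f y - f x) / (y - x)) \<longlongrightarrow> D) (at_right x)"
    by (rule Lim_transform_eventually[OF 2]) (auto simp: eventually_at_filter assms(4))
  ultimately show ?thesis unfolding has_field_derivative_iff by (simp add: filterlim_at_split)
qed

lemma cont_split:
  fixes f g1 g2 :: "real \<Rightarrow> real"
  assumes "isCont g1 x" "isCont g2 x"
    and "\<And>y. y \<le> x \<Longrightarrow> f y = g1 y" "\<And>y. y \<ge> x \<Longrightarrow> f y = g2 y"
  shows "isCont f x"
proof -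
  have 1: "(g1 \<longlongrightarrow> f x) (at_left x)"
    using assms(1,3) unfolding isCont_def by (simp add: filterlim_at_split)
  have 2: "(g2 \<longlongrightarrow> f x) (at_right x)"
    using assms(2,4) unfolding isCont_def by (simp add: filterlim_at_split)
  have "(f \<longlongrightarrow> f x) (at_left x)"
    by (rule Lim_transform_eventually[OF 1]) (auto simp: eventually_at_filter assms(3))
  moreover have "(f \<longlongrightarrow> f x) (at_right x)"
    by (rule Lim_transform_eventually[OF 2]) (auto simp: eventually_at_filter assms(4))
  ultimately show ?thesis unfolding isCont_def by (simp add: filterlim_at_split)
qed

lemma dini_mono:
  fixes F :: "real \<Rightarrow> real"
  assumes pq: "p \<le> q" and cont: "continuous_on {p..q} F"
    and loc: "\<And>x e. x \<in> {p..<q} \<Longrightarrow> e > 0 \<Longrightarrow>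
        \<exists>d>0. \<forall>y. x < y \<and> y < x + d \<and> y \<le> q \<longrightarrow> F y - F x \<le> e * (y - x)"
  shows "F q \<le> F p"
proof -
  have "F q \<le> F p + e * (q - p)" if e: "e > 0" for e
  proof -
    define S where "S = {x \<in> {p..q}. F x \<le> F p + e * (x - p)}"
    have cS: "closed S" unfolding S_def
      by (rule continuous_on_closed_Collect_le[OF cont]) (auto intro!: continuous_intros)
    have pS: "p \<in> S" using pq by (simp add: S_def)
    have bS: "bdd_above S" unfolding S_def by (rule bdd_aboveI[of _ q]) auto
    define s where "s = Sup S"
    have sS: "s \<in> S" unfolding s_def using cS pS bS closed_contains_Sup by blast
    have "s = q"
    proof (rule ccontr)
      assume "s \<noteq> q"
      with sS have sq: "s < q" by (auto simp: S_def)
      from sS sq have "s \<in> {p..<q}" by (auto simp: S_def)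
      from loc[OF this e] obtain d where d: "d > 0"
        "\<And>y. x < y \<and> y < s + d \<and> y \<le> q \<Longrightarrow> True"
        "\<forall>y. s < y \<and> y < s + d \<and> y \<le> q \<longrightarrow> F y - F s \<le> e * (y - s)" by blast
      define y where "y = min (s + d/2) q"
      have y: "s < y" "y < s + d" "y \<le> q" using d(1) sq by (auto simp: y_def)
      with d(3) have "F y - F s \<le> e * (y - s)" by blast
      moreover have "F s \<le> F p + e * (s - p)" using sS by (simp add: S_def)
      ultimately have "F y \<le> F p + e * (y - p)" by (simp add: algebra_simps)
      moreover have "p \<le> y" using sS y by (auto simp: S_def)
      ultimately have "y \<in> S" using y by (simp add: S_def)
      hence "y \<le> s" unfolding s_def using bS by (rule cSup_upper)
      with y show False by simp
    qed
    thus ?thesis using sS by (simp add: S_def)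
  qed
  hence "\<forall>e>0. F q \<le> F p + e * (q - p)" by blast
  show ?thesis
  proof (rule ccontr)
    assume "\<not> F q \<le> F p"
    hence pos: "F q - F p > 0" by simp
    with pq have "q - p > 0"
      using \<open>\<forall>e>0. _\<close> by (metis add.right_neutral less_le_not_le mult_zero_left zero_less_one
          diff_gt_0_iff_gt order_le_less mult_pos_pos)
    define e where "e = (F q - F p) / (2 * (q - p))"
    have "e > 0" using pos \<open>q - p > 0\<close> by (simp add: e_def)
    hence "F q \<le> F p + e * (q - p)" using \<open>\<forall>e>0. _\<close> by blast
    moreover have "e * (q - p) = (F q - F p) / 2" using \<open>q - p > 0\<close> by (simp add: e_def field_simps)
    ultimately have "F q \<le> F p + (F q - F p) / 2" by simp
    thus False using pos by argo
  qed
qed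


lemma sturm:
  fixes \<phi> \<phi>' \<psi> \<psi>' \<psi>'' :: "real \<Rightarrow> real"
  assumes pq: "p \<le> q"
   and dphi: "\<And>x. x \<in> {p..q} \<Longrightarrow> (\<phi> has_real_derivative \<phi>' x) (at x)"
   and cphi': "continuous_on {p..q} \<phi>'"
   and phipos: "\<And>x. x \<in> {p..q} \<Longrightarrow> \<phi> x \<ge> 0"
   and weak: "\<And>x y. p \<le> x \<Longrightarrow> x \<le> y \<Longrightarrow> y \<le> q \<Longrightarrow> \<phi>' y - \<phi>' x \<le> \<gamma> * integral {x..y} \<phi>"
   and dpsi: "\<And>x. x \<in> {p..q} \<Longrightarrow> (\<psi> has_real_derivative \<psi>' x) (at x)"
   and dpsi': "\<And>x. x \<in> {p..q} \<Longrightarrow> (\<psi>' has_real_derivative \<psi>'' x) (at x)"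
   and psipos: "\<And>x. x \<in> {p..q} \<Longrightarrow> \<psi> x \<ge> 0"
   and sub: "\<And>x. x \<in> {p..q} \<Longrightarrow> \<gamma> * \<psi> x \<le> \<psi>'' x"
  shows "\<phi>' q * \<psi> q - \<phi> q * \<psi>' q \<le> \<phi>' p * \<psi> p - \<phi> p * \<psi>' p"
proof -
  define F where "F = (\<lambda>x. \<phi>' x * \<psi> x - \<phi> x * \<psi>' x)"
  have cphi: "continuous_on {p..q} \<phi>"
    by (rule continuous_at_imp_continuous_on) (use dphi DERIV_isCont in blast)
  have cpsi: "continuous_on {p..q} \<psi>"
    by (rule continuous_at_imp_continuous_on) (use dpsi DERIV_isCont in blast)
  have cpsi': "continuous_on {p..q} \<psi>'"
    by (rule continuous_at_imp_continuous_on) (use dpsi' DERIV_isCont in blast)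
  have "F q \<le> F p"
  proof (rule dini_mono[OF pq])
    show "continuous_on {p..q} F" unfolding F_def
      by (intro continuous_intros cphi cpsi cpsi' cphi')
  next
    fix x e :: real assume x: "x \<in> {p..<q}" and e: "e > 0"
    have cphix: "continuous_on {x..q} \<phi>" using x by (auto intro: continuous_on_subset[OF cphi])
    define R where "R = (\<lambda>y. \<gamma> * \<psi> y * integral {x..y} \<phi> + \<phi>' x * (\<psi> y - \<psi> x) - \<phi> y * \<psi>' y + \<phi> x * \<psi>' x)"
    define D where "D = \<gamma> * \<psi> x * \<phi> x + \<phi>' x * \<psi>' x - (\<phi>' x * \<psi>' x + \<phi> x * \<psi>'' x)"
    have xpq: "x \<in> {p..q}" using x by auto
    have I: "((\<lambda>y. integral {x..y} \<phi>) has_real_derivative \<phi> x) (at x within {x..q})"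
      using integral_has_real_derivative[OF cphix, of x] x by auto
    have "(R has_real_derivative D) (at x within {x..q})"
      unfolding R_def D_def
      apply (rule derivative_eq_intros has_field_derivative_at_within[OF dpsi[OF xpq]]
               has_field_derivative_at_within[OF dphi[OF xpq]]
               has_field_derivative_at_within[OF dpsi'[OF xpq]] I refl)+
      apply (simp add: algebra_simps)
      done
    hence lim: "((\<lambda>y. (R y - R x) / (y - x)) \<longlongrightarrow> D) (at x within {x..q})"
      by (simp add: has_field_derivative_iff)
    have D0: "D \<le> 0"
    proof -
      have "D = \<phi> x * (\<gamma> * \<psi> x - \<psi>'' x)" by (simp add: D_def algebra_simps)
      also have "\<dots> \<le> 0" using phipos[OF xpq] sub[OF xpq]
        by (simp add: mult_nonneg_nonpos)
      finally show ?thesis .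
    qed
    have Rx: "R x = 0" by (simp add: R_def)
    have "eventually (\<lambda>y. dist ((R y - R x) / (y - x)) D < e) (at x within {x..q})"
      using lim e by (rule tendstoD)
    then obtain d where d: "d > 0"
      "\<And>y. y \<in> {x..q} \<Longrightarrow> y \<noteq> x \<Longrightarrow> dist y x < d \<Longrightarrow> dist ((R y - R x) / (y - x)) D < e"
      unfolding eventually_at by blast
    show "\<exists>d>0. \<forall>y. x < y \<and> y < x + d \<and> y \<le> q \<longrightarrow> F y - F x \<le> e * (y - x)"
    proof (intro exI[of _ d] conjI allI impI)
      show "d > 0" by fact
      fix y assume y: "x < y \<and> y < x + d \<and> y \<le> q"
      have "dist ((R y - R x) / (y - x)) D < e"
        using y by (intro d(2)) (auto simp: dist_real_def)
      hence "R y / (y - x) < D + e" using Rx by (simp add: dist_real_def abs_less_iff)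
      hence "R y / (y - x) < e" using D0 by simp
      hence Ry: "R y \<le> e * (y - x)" using y by (simp add: divide_less_eq)
      have ypq: "y \<in> {p..q}" using y x by auto
      have w: "\<phi>' y - \<phi>' x \<le> \<gamma> * integral {x..y} \<phi>" using weak[of x y] x y by auto
      have "F y - F x \<le> R y"
      proof -
        have "R y - (F y - F x) = \<psi> y * (\<gamma> * integral {x..y} \<phi> - (\<phi>' y - \<phi>' x))"
          by (simp add: R_def F_def algebra_simps)
        also have "\<dots> \<ge> 0" using psipos[OF ypq] w by simp
        finally show ?thesis by simp
      qed
      with Ry show "F y - F x \<le> e * (y - x)" by simp
    qed
  qed
  thus ?thesis by (simp add: F_def)
qed


definition weakss :: "real \<Rightarrow> real \<Rightarrow> real \<Rightarrow> real \<Rightarrow> real \<Rightarrow> (real \<Rightarrow> real) \<Rightarrow> (real \<Rightarrow> real) \<Rightarrow> bool" where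
 "weakss r1 r2 r3 L lam \<phi> \<phi>' \<longleftrightarrow> (\<forall>x. (\<phi> has_real_derivative \<phi>' x) (at x)) \<and> (\<forall>x. isCont \<phi>' x) \<and> (\<forall>x. \<phi> x > 0) \<and>
   (\<forall>x y r. x \<le> y \<longrightarrow> (\<forall>t. x < t \<longrightarrow> t < y \<longrightarrow> mfun r1 r2 r3 t = r) \<longrightarrow>
        \<phi>' y - \<phi>' x \<le> - (L^2 * (r + lam)) * integral {x..y} \<phi>)"

lemma supersol_weak:
  assumes ss: "supersol r1 r2 r3 L lam \<phi>" and L: "L > 0"
  shows "\<exists>\<phi>'. weakss r1 r2 r3 L lam \<phi> \<phi>'"
proof -
  obtain \<phi>' \<phi>'' where
    d: "\<And>x. (\<phi> has_real_derivative \<phi>' x) (at x)" and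
    int: "\<And>a b. set_integrable lborel {a..b} \<phi>''" and
    ftc: "\<And>x. \<phi>' x = \<phi>' 0 + (LBINT t=0..x. \<phi>'' t)" and
    pos: "\<And>x. \<phi> x > 0" and
    ae: "AE y in lborel. \<phi>'' y / L\<^sup>2 + (mfun r1 r2 r3 y + lam) * \<phi> y \<le> 0"
    using ss unfolding supersol_def by blast
  have cphi: "continuous_on S \<phi>" for S
    by (rule continuous_at_imp_continuous_on) (use d DERIV_isCont in blast)
  have diff: "\<phi>' y - \<phi>' x = integral {x..y} \<phi>''" if xy: "x \<le> y" for x y
  proof -
    define a where "a = min 0 (min x y)"
    define b where "b = max 0 (max x y)"
    have "set_integrable lborel {a<..<b} \<phi>''"
      by (rule set_integrable_subset[OF int[of a b]]) auto
    hence ii: "interval_lebesgue_integrable lborel (min 0 (min (ereal x) (ereal y))) (max 0 (max (ereal x) (ereal y))) \<phi>''"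
    proof -
      have e1: "min 0 (min (ereal x) (ereal y)) = ereal a" by (simp add: a_def zero_ereal_def)
      have e2: "max 0 (max (ereal x) (ereal y)) = ereal b" by (simp add: b_def zero_ereal_def)
      have "a \<le> b" by (simp add: a_def b_def)
      thus ?thesis unfolding e1 e2 interval_lebesgue_integrable_def using \<open>set_integrable lborel {a<..<b} \<phi>''\<close> by simp
    qed
    have "(LBINT t=0..x. \<phi>'' t) + (LBINT t=x..y. \<phi>'' t) = (LBINT t=0..y. \<phi>'' t)"
      by (rule interval_integral_sum) (use ii in simp)
    hence "\<phi>' y - \<phi>' x = (LBINT t=x..y. \<phi>'' t)" using ftc[of x] ftc[of y] by simp
    also have "\<dots> = integral {x..y} \<phi>''"
      by (rule interval_integral_eq_integral[OF xy int])
    finally show ?thesis .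
  qed
  have cphi': "isCont \<phi>' z" for z
  proof -
    define a where "a = z - 1"
    define b where "b = z + 1"
    have "\<phi>'' integrable_on {a..b}" using set_borel_integral_eq_integral(1)[OF int] .
    hence c: "continuous_on {a..b} (\<lambda>w. integral {a..w} \<phi>'')" by (rule indefinite_integral_continuous_1)
    have "continuous_on {a..b} (\<lambda>w. \<phi>' a + integral {a..w} \<phi>'')" by (intro continuous_intros c)
    moreover have "\<phi>' a + integral {a..w} \<phi>'' = \<phi>' w" if "w \<in> {a..b}" for w
    proof -
      have "a \<le> w" using that by simp
      from diff[OF this] show ?thesis by simp
    qed
    ultimately have "continuous_on {a..b} \<phi>'" by (rule continuous_on_eq)
    moreover have "z \<in> interior {a..b}" unfolding interior_atLeastAtMost_real by (simp add: a_def b_def)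
    ultimately show ?thesis using continuous_on_interior by blast
  qed
  have weak: "\<phi>' y - \<phi>' x \<le> - (L^2 * (r + lam)) * integral {x..y} \<phi>"
    if xy: "x \<le> y" and reg: "\<And>t. x < t \<Longrightarrow> t < y \<Longrightarrow> mfun r1 r2 r3 t = r" for x y r
  proof -
    define c where "c = - (L^2 * (r + lam))"
    have i1: "set_integrable lborel {x..y} \<phi>''" by (rule int)
    have i2: "set_integrable lborel {x..y} (\<lambda>t. c * \<phi> t)"
      by (rule borel_integrable_atLeastAtMost') (intro continuous_intros cphi)
    have aeI: "AE t \<in> {x..y} in lborel. \<phi>'' t \<le> c * \<phi> t"
      using ae AE_lborel_singleton[of x] AE_lborel_singleton[of y]
    proof eventually_elim
      case (elim t)
      show ?case
      proof
        assume "t \<in> {x..y}"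
        with elim have "x < t" "t < y" by auto
        hence m: "mfun r1 r2 r3 t = r" by (rule reg)
        have L2: "L\<^sup>2 > 0" using L by simp
        from elim(1) m have "\<phi>'' t / L\<^sup>2 \<le> - ((r + lam) * \<phi> t)" by simp
        hence "\<phi>'' t \<le> - ((r + lam) * \<phi> t) * L\<^sup>2" using L2 by (simp add: divide_le_eq)
        thus "\<phi>'' t \<le> c * \<phi> t" by (simp add: c_def algebra_simps)
      qed
    qed
    have "\<phi>' y - \<phi>' x = (LINT t:{x..y}|lborel. \<phi>'' t)"
      using diff[OF xy] set_borel_integral_eq_integral(2)[OF i1] by simp
    also have "\<dots> \<le> (LINT t:{x..y}|lborel. c * \<phi> t)"
      by (rule set_integral_mono_AE[OF i1 i2 aeI])
    also have "\<dots> = integral {x..y} (\<lambda>t. c * \<phi> t)"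
      by (rule set_borel_integral_eq_integral(2)[OF i2])
    also have "\<dots> = c * integral {x..y} \<phi>" by simp
    finally show ?thesis by (simp add: c_def)
  qed
  show ?thesis unfolding weakss_def
    using d cphi' pos weak by blast
qed


lemma weakss_piece:
  fixes \<psi> \<psi>' \<psi>'' :: "real \<Rightarrow> real"
  assumes w: "weakss r1 r2 r3 L lam \<phi> \<phi>'" and pq: "p \<le> q"
    and reg: "\<And>t. p < t \<Longrightarrow> t < q \<Longrightarrow> mfun r1 r2 r3 t = r"
    and dpsi: "\<And>x. x \<in> {p..q} \<Longrightarrow> (\<psi> has_real_derivative \<psi>' x) (at x)"
    and dpsi': "\<And>x. x \<in> {p..q} \<Longrightarrow> (\<psi>' has_real_derivative \<psi>'' x) (at x)"
    and psipos: "\<And>x. x \<in> {p..q} \<Longrightarrow> \<psi> x \<ge> 0"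
    and sub: "\<And>x. x \<in> {p..q} \<Longrightarrow> - (L^2 * (r + lam)) * \<psi> x \<le> \<psi>'' x"
  shows "\<phi>' q * \<psi> q - \<phi> q * \<psi>' q \<le> \<phi>' p * \<psi> p - \<phi> p * \<psi>' p"
proof (rule sturm[OF pq _ _ _ _ dpsi dpsi' psipos sub])
  show "\<And>x. (\<phi> has_real_derivative \<phi>' x) (at x)" using w by (simp add: weakss_def)
  show "continuous_on {p..q} \<phi>'" using w by (intro continuous_at_imp_continuous_on) (simp add: weakss_def)
  show "\<And>x. 0 \<le> \<phi> x" using w by (simp add: weakss_def less_imp_le)
  fix x y assume "p \<le> x" "x \<le> y" "y \<le> q"
  moreover have "\<forall>t. x < t \<longrightarrow> t < y \<longrightarrow> mfun r1 r2 r3 t = r"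
    using reg \<open>p \<le> x\<close> \<open>y \<le> q\<close> by auto
  ultimately show "\<phi>' y - \<phi>' x \<le> - (L^2 * (r + lam)) * integral {x..y} \<phi>"
    using w unfolding weakss_def by blast
qed

lemma sin_bump:
  assumes w: "weakss r1 r2 r3 L lam \<phi> \<phi>'" and L: "L > 0" and rl: "r + lam > 0"
    and reg: "\<And>t. p < t \<Longrightarrow> t < p + pi / (L * sqrt (r + lam)) \<Longrightarrow> mfun r1 r2 r3 t = r"
  shows False
proof -
  define \<omega> where "\<omega> = L * sqrt (r + lam)"
  have om: "\<omega> > 0" using L rl by (simp add: \<omega>_def)
  have om2: "\<omega>^2 = L^2 * (r + lam)" using rl by (simp add: \<omega>_def power_mult_distrib)
  define q where "q = p + pi / \<omega>"
  have pq: "p \<le> q" using om by (simp add: q_def)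
  have qp: "\<omega> * (q - p) = pi" using om by (simp add: q_def)
  have "\<phi>' q * sin (\<omega> * (q - p)) - \<phi> q * (\<omega> * cos (\<omega> * (q - p)))
      \<le> \<phi>' p * sin (\<omega> * (p - p)) - \<phi> p * (\<omega> * cos (\<omega> * (p - p)))"
  proof (rule weakss_piece[OF w pq, where r=r])
    show "\<And>t. p < t \<Longrightarrow> t < q \<Longrightarrow> mfun r1 r2 r3 t = r" using reg by (simp add: q_def \<omega>_def)
    show "\<And>x. x \<in> {p..q} \<Longrightarrow> ((\<lambda>y. sin (\<omega> * (y - p))) has_real_derivative \<omega> * cos (\<omega> * (x - p))) (at x)"
      by (auto intro!: derivative_eq_intros)
    show "\<And>x. x \<in> {p..q} \<Longrightarrow> ((\<lambda>y. \<omega> * cos (\<omega> * (y - p))) has_real_derivative - (\<omega>^2) * sin (\<omega> * (x - p))) (at x)"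
      by (auto intro!: derivative_eq_intros simp: power2_eq_square)
    show "\<And>x. x \<in> {p..q} \<Longrightarrow> 0 \<le> sin (\<omega> * (x - p))"
    proof -
      fix x assume x: "x \<in> {p..q}"
      have "\<omega> * (x - p) \<le> \<omega> * (q - p)" using x om by (intro mult_left_mono) auto
      thus "0 \<le> sin (\<omega> * (x - p))" using x om qp by (intro sin_ge_zero) auto
    qed
    show "\<And>x. x \<in> {p..q} \<Longrightarrow> - (L^2 * (r + lam)) * sin (\<omega> * (x - p)) \<le> - (\<omega>^2) * sin (\<omega> * (x - p))"
      using om2 by simp
  qed
  hence "\<phi> q * \<omega> \<le> - (\<phi> p * \<omega>)" using qp by simp
  moreover have "\<phi> q > 0" "\<phi> p > 0" using w by (auto simp: weakss_def)
  ultimately show False using om by (smt (verit) mult_pos_pos)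
qed

lemma below_M:
  assumes ss: "supersol r1 r2 r3 L lam \<phi>" and L: "L > 0" and lam: "lam > - max r1 r3"
  shows False
proof -
  obtain \<phi>' where w: "weakss r1 r2 r3 L lam \<phi> \<phi>'" using supersol_weak[OF ss L] by blast
  show False
  proof (cases "r1 \<le> r3")
    case True
    hence rl: "r3 + lam > 0" using lam by simp
    show False
      by (rule sin_bump[OF w L rl, where p=1]) (simp add: mfun_def)
  next
    case False
    hence rl: "r1 + lam > 0" using lam by simp
    show False
      by (rule sin_bump[OF w L rl, where p="- pi / (L * sqrt (r1 + lam))"]) (simp add: mfun_def)
  qed
qed


definition Lf :: "real \<Rightarrow> real \<Rightarrow> real \<Rightarrow> real \<Rightarrow> real" where
  "Lf r1 r2 r3 \<mu> = (arctan (sqrt ((\<mu> - r1) / (r2 - \<mu>))) + arctan (sqrt ((\<mu> - r3) / (r2 - \<mu>)))) / sqrt (r2 - \<mu>)"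

lemma ktan:
  assumes "L > 0" "r \<le> \<mu>" "\<mu> < r2"
  shows "L * sqrt (r2 - \<mu>) * tan (arctan (sqrt ((\<mu> - r) / (r2 - \<mu>)))) = L * sqrt (\<mu> - r)"
  using assms by (simp add: tan_arctan real_sqrt_divide)

lemma F5:
  assumes w: "weakss r1 r2 r3 L (- \<mu>) \<phi> \<phi>'" and L: "L > 0"
    and M: "max r1 r3 \<le> \<mu>" and mu: "\<mu> < r2"
    and big: "L > Lf r1 r2 r3 \<mu>"
  shows False
proof -
  define a where "a = sqrt (r2 - \<mu>)"
  have a: "a > 0" using mu by (simp add: a_def)
  define k where "k = L * a"
  have k: "k > 0" using a L by (simp add: k_def)
  define \<theta>1 where "\<theta>1 = arctan (sqrt ((\<mu> - r1) / (r2 - \<mu>)))"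
  define \<theta>3 where "\<theta>3 = arctan (sqrt ((\<mu> - r3) / (r2 - \<mu>)))"
  define \<kappa>1 where "\<kappa>1 = L * sqrt (\<mu> - r1)"
  define \<kappa>3 where "\<kappa>3 = L * sqrt (\<mu> - r3)"
  have th1: "0 \<le> \<theta>1" "\<theta>1 < pi/2" using M mu arctan_ubound[of "sqrt ((\<mu> - r1) / (r2 - \<mu>))"] by (auto simp: \<theta>1_def)
  have th3: "0 \<le> \<theta>3" "\<theta>3 < pi/2" using M mu arctan_ubound[of "sqrt ((\<mu> - r3) / (r2 - \<mu>))"] by (auto simp: \<theta>3_def)
  have ka1: "\<kappa>1 \<ge> 0" "\<kappa>3 \<ge> 0" using M L by (auto simp: \<kappa>1_def \<kappa>3_def)
  have kt1: "k * tan \<theta>1 = \<kappa>1" unfolding k_def a_def \<theta>1_def \<kappa>1_def using ktan[OF L _ mu] M by simp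
  have kt3: "k * tan \<theta>3 = \<kappa>3" unfolding k_def a_def \<theta>3_def \<kappa>3_def using ktan[OF L _ mu] M by simp
  have kbig: "k > \<theta>1 + \<theta>3"
  proof -
    have "(\<theta>1 + \<theta>3) / a < L" using big by (simp add: Lf_def \<theta>1_def \<theta>3_def a_def)
    thus ?thesis using a by (simp add: k_def divide_less_eq mult.commute)
  qed
  have g1: "- (L^2 * (r1 + - \<mu>)) = \<kappa>1^2" using M by (simp add: \<kappa>1_def power_mult_distrib algebra_simps)
  have g2: "- (L^2 * (r2 + - \<mu>)) = - (k^2)" using mu by (simp add: k_def a_def power_mult_distrib algebra_simps)
  have g3: "- (L^2 * (r3 + - \<mu>)) = \<kappa>3^2" using M by (simp add: \<kappa>3_def power_mult_distrib algebra_simps)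
  have phipos: "\<And>x. \<phi> x > 0" using w by (simp add: weakss_def)
  show False
  proof (cases "k \<ge> pi")
    case True
    have rl: "r2 + - \<mu> > 0" using mu by simp
    show False
    proof (rule sin_bump[OF w L rl, where p=0])
      fix t assume "0 < t" "t < 0 + pi / (L * sqrt (r2 + - \<mu>))"
      moreover have "pi / (L * sqrt (r2 + - \<mu>)) \<le> 1"
        using True k by (simp add: k_def a_def divide_le_eq)
      ultimately show "mfun r1 r2 r3 t = r2" by (simp add: mfun_def)
    qed
  next
    case False
    hence kpi: "k < pi" by simp
    define \<beta> where "\<beta> = (max \<theta>1 (k - pi/2) + min (pi/2) (k - \<theta>3)) / 2"
    have b1: "\<theta>1 < \<beta>" "k - pi/2 < \<beta>" "\<beta> < pi/2" "\<beta> < k - \<theta>3"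
      using th1 th3 kbig kpi unfolding \<beta>_def by (auto simp: max_def min_def)
    have bpos: "0 < \<beta>" using b1 th1 by simp
    have cb: "cos \<beta> > 0" using b1 bpos by (intro cos_gt_zero_pi) auto
    have sb: "sin \<beta> > 0" using b1 bpos by (intro sin_gt_zero) auto
    have ckb: "cos (k - \<beta>) > 0" using b1 th3 by (intro cos_gt_zero_pi) auto
    have skb: "sin (k - \<beta>) > 0" using b1 th3 by (intro sin_gt_zero) auto
    define \<sigma> where "\<sigma> = k * tan \<beta>"
    have sig: "\<sigma> > \<kappa>1"
    proof -
      have "tan \<theta>1 < tan \<beta>" using th1 b1 by (intro tan_monotone) auto
      thus ?thesis using k unfolding \<sigma>_def kt1[symmetric] by (rule mult_strict_left_mono)
    qed
    define \<sigma>' where "\<sigma>' = (\<kappa>1 + \<sigma>) / 2"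
    have sig': "\<kappa>1 < \<sigma>'" "\<sigma>' < \<sigma>" "0 < \<sigma>'" using sig ka1 by (auto simp: \<sigma>'_def)
    define dL where "dL = 1 - \<sigma>' / \<sigma>"
    have dL: "0 < dL" "dL < 1" using sig' by (auto simp: dL_def field_simps)
    define aa where "aa = ln dL / \<sigma>'"
    have aa: "aa < 0" using dL sig' by (simp add: aa_def divide_neg_pos)
    have eaa: "exp (\<sigma>' * aa) = dL" using dL sig' by (simp add: aa_def)
    define A where "A = k * sin \<beta> / \<sigma>'"
    have A: "A > 0" using k sb sig' by (simp add: A_def)
    have WL: "\<phi>' 0 * (A * (exp (\<sigma>' * 0) - dL)) - \<phi> 0 * (A * \<sigma>' * exp (\<sigma>' * 0))
        \<le> \<phi>' aa * (A * (exp (\<sigma>' * aa) - dL)) - \<phi> aa * (A * \<sigma>' * exp (\<sigma>' * aa))"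
    proof (rule weakss_piece[OF w, where r=r1])
      show "aa \<le> 0" using aa by simp
      show "\<And>t. aa < t \<Longrightarrow> t < 0 \<Longrightarrow> mfun r1 r2 r3 t = r1" by (simp add: mfun_def)
      show "\<And>x. x \<in> {aa..0} \<Longrightarrow> ((\<lambda>y. A * (exp (\<sigma>' * y) - dL)) has_real_derivative A * \<sigma>' * exp (\<sigma>' * x)) (at x)"
        by (auto intro!: derivative_eq_intros)
      show "\<And>x. x \<in> {aa..0} \<Longrightarrow> ((\<lambda>y. A * \<sigma>' * exp (\<sigma>' * y)) has_real_derivative A * \<sigma>'^2 * exp (\<sigma>' * x)) (at x)"
        by (auto intro!: derivative_eq_intros simp: power2_eq_square)
      show "\<And>x. x \<in> {aa..0} \<Longrightarrow> 0 \<le> A * (exp (\<sigma>' * x) - dL)"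
      proof -
        fix x assume "x \<in> {aa..0}"
        hence "\<sigma>' * aa \<le> \<sigma>' * x" using sig' by (intro mult_left_mono) auto
        hence "dL \<le> exp (\<sigma>' * x)" using eaa by (metis exp_le_cancel_iff)
        thus "0 \<le> A * (exp (\<sigma>' * x) - dL)" using A by simp
      qed
      show "\<And>x. x \<in> {aa..0} \<Longrightarrow> - (L^2 * (r1 + - \<mu>)) * (A * (exp (\<sigma>' * x) - dL)) \<le> A * \<sigma>'^2 * exp (\<sigma>' * x)"
      proof -
        fix x
        have "\<kappa>1^2 \<le> \<sigma>'^2" using sig' ka1 by (intro power_mono) auto
        moreover have "\<kappa>1^2 * (A * (exp (\<sigma>' * x) - dL)) \<le> \<kappa>1^2 * (A * exp (\<sigma>' * x))"
          using A dL by (intro mult_left_mono) auto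
        ultimately show "- (L^2 * (r1 + - \<mu>)) * (A * (exp (\<sigma>' * x) - dL)) \<le> A * \<sigma>'^2 * exp (\<sigma>' * x)"
          unfolding g1 using A by (smt (verit) exp_gt_zero mult.assoc mult.commute mult_right_mono)
      qed
    qed
    have L0: "A * (1 - dL) = cos \<beta>"
    proof -
      have "A * (1 - dL) = k * sin \<beta> / \<sigma>" using sig' by (simp add: A_def dL_def)
      also have "\<dots> = cos \<beta>" using cb k sb by (simp add: \<sigma>_def tan_def)
      finally show ?thesis .
    qed
    have L1: "A * \<sigma>' = k * sin \<beta>" using sig' by (simp add: A_def)
    have WLa: "\<phi>' aa * (A * (exp (\<sigma>' * aa) - dL)) - \<phi> aa * (A * \<sigma>' * exp (\<sigma>' * aa)) < 0"
      using eaa phipos[of aa] A sig' dL by simp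
    have WL0: "\<phi>' 0 * cos \<beta> - \<phi> 0 * (k * sin \<beta>) < 0"
      using WL WLa L0 L1 by simp
    have WM: "\<phi>' 1 * cos (k * 1 - \<beta>) - \<phi> 1 * (- k * sin (k * 1 - \<beta>))
        \<le> \<phi>' 0 * cos (k * 0 - \<beta>) - \<phi> 0 * (- k * sin (k * 0 - \<beta>))"
    proof (rule weakss_piece[OF w, where r=r2])
      show "(0::real) \<le> 1" by simp
      show "\<And>t. 0 < t \<Longrightarrow> t < 1 \<Longrightarrow> mfun r1 r2 r3 t = r2" by (simp add: mfun_def)
      show "\<And>x. x \<in> {0..1} \<Longrightarrow> ((\<lambda>y. cos (k * y - \<beta>)) has_real_derivative - k * sin (k * x - \<beta>)) (at x)"
        by (auto intro!: derivative_eq_intros)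
      show "\<And>x. x \<in> {0..1} \<Longrightarrow> ((\<lambda>y. - k * sin (k * y - \<beta>)) has_real_derivative - (k^2) * cos (k * x - \<beta>)) (at x)"
        by (auto intro!: derivative_eq_intros simp: power2_eq_square)
      show "\<And>x. x \<in> {0..1} \<Longrightarrow> 0 \<le> cos (k * x - \<beta>)"
      proof -
        fix x :: real assume x: "x \<in> {0..1}"
        have "k * x \<le> k" using x k by (simp add: mult_le_cancel_left1)
        moreover have "0 \<le> k * x" using x k by simp
        ultimately show "0 \<le> cos (k * x - \<beta>)" using b1 th3 by (intro cos_ge_zero) auto
      qed
      show "\<And>x. x \<in> {0..1} \<Longrightarrow> - (L^2 * (r2 + - \<mu>)) * cos (k * x - \<beta>) \<le> - (k^2) * cos (k * x - \<beta>)"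
        unfolding g2 by simp
    qed
    hence WM': "\<phi>' 1 * cos (k - \<beta>) + \<phi> 1 * (k * sin (k - \<beta>)) \<le> \<phi>' 0 * cos \<beta> - \<phi> 0 * (k * sin \<beta>)"
      by simp
    define \<tau> where "\<tau> = k * tan (k - \<beta>)"
    have tau: "\<tau> > \<kappa>3"
    proof -
      have "tan \<theta>3 < tan (k - \<beta>)" using th3 b1 by (intro tan_monotone) auto
      thus ?thesis using k unfolding \<tau>_def kt3[symmetric] by (rule mult_strict_left_mono)
    qed
    define \<tau>' where "\<tau>' = (\<kappa>3 + \<tau>) / 2"
    have tau': "\<kappa>3 < \<tau>'" "\<tau>' < \<tau>" "0 < \<tau>'" using tau ka1 by (auto simp: \<tau>'_def)
    define dR where "dR = 1 - \<tau>' / \<tau>"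
    have dR: "0 < dR" "dR < 1" using tau' by (auto simp: dR_def field_simps)
    define bb where "bb = 1 - ln dR / \<tau>'"
    have bb: "bb > 1" using dR tau' by (simp add: bb_def divide_neg_pos)
    have ebb: "exp (- \<tau>' * (bb - 1)) = dR" using dR tau' by (simp add: bb_def)
    define B where "B = k * sin (k - \<beta>) / \<tau>'"
    have B: "B > 0" using k skb tau' by (simp add: B_def)
    have WR: "\<phi>' bb * (B * (exp (- \<tau>' * (bb - 1)) - dR)) - \<phi> bb * (- B * \<tau>' * exp (- \<tau>' * (bb - 1)))
        \<le> \<phi>' 1 * (B * (exp (- \<tau>' * (1 - 1)) - dR)) - \<phi> 1 * (- B * \<tau>' * exp (- \<tau>' * (1 - 1)))"
    proof (rule weakss_piece[OF w, where r=r3])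
      show "1 \<le> bb" using bb by simp
      show "\<And>t. 1 < t \<Longrightarrow> t < bb \<Longrightarrow> mfun r1 r2 r3 t = r3" by (simp add: mfun_def)
      show "\<And>x. x \<in> {1..bb} \<Longrightarrow> ((\<lambda>y. B * (exp (- \<tau>' * (y - 1)) - dR)) has_real_derivative - B * \<tau>' * exp (- \<tau>' * (x - 1))) (at x)"
        by (auto intro!: derivative_eq_intros)
      show "\<And>x. x \<in> {1..bb} \<Longrightarrow> ((\<lambda>y. - B * \<tau>' * exp (- \<tau>' * (y - 1))) has_real_derivative B * \<tau>'^2 * exp (- \<tau>' * (x - 1))) (at x)"
        by (auto intro!: derivative_eq_intros simp: power2_eq_square)
      show "\<And>x. x \<in> {1..bb} \<Longrightarrow> 0 \<le> B * (exp (- \<tau>' * (x - 1)) - dR)"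
      proof -
        fix x assume "x \<in> {1..bb}"
        hence "- \<tau>' * (bb - 1) \<le> - \<tau>' * (x - 1)" using tau' by (intro mult_left_mono_neg) auto
        hence "dR \<le> exp (- \<tau>' * (x - 1))" using ebb by (metis exp_le_cancel_iff)
        thus "0 \<le> B * (exp (- \<tau>' * (x - 1)) - dR)" using B by simp
      qed
      show "\<And>x. x \<in> {1..bb} \<Longrightarrow> - (L^2 * (r3 + - \<mu>)) * (B * (exp (- \<tau>' * (x - 1)) - dR)) \<le> B * \<tau>'^2 * exp (- \<tau>' * (x - 1))"
      proof -
        fix x
        have "\<kappa>3^2 \<le> \<tau>'^2" using tau' ka1 by (intro power_mono) auto
        moreover have "\<kappa>3^2 * (B * (exp (- \<tau>' * (x - 1)) - dR)) \<le> \<kappa>3^2 * (B * exp (- \<tau>' * (x - 1)))"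
          using B dR by (intro mult_left_mono) auto
        ultimately show "- (L^2 * (r3 + - \<mu>)) * (B * (exp (- \<tau>' * (x - 1)) - dR)) \<le> B * \<tau>'^2 * exp (- \<tau>' * (x - 1))"
          unfolding g3 using B by (smt (verit) exp_gt_zero mult.assoc mult.commute mult_right_mono)
      qed
    qed
    have R0: "B * (1 - dR) = cos (k - \<beta>)"
    proof -
      have "B * (1 - dR) = k * sin (k - \<beta>) / \<tau>" using tau' by (simp add: B_def dR_def)
      also have "\<dots> = cos (k - \<beta>)" using ckb k skb by (simp add: \<tau>_def tan_def)
      finally show ?thesis .
    qed
    have R1: "B * \<tau>' = k * sin (k - \<beta>)" using tau' by (simp add: B_def)
    have e1: "exp (- \<tau>' * (1 - 1)) = 1" by simp
    have lhs: "\<phi>' bb * (B * (exp (- \<tau>' * (bb - 1)) - dR)) - \<phi> bb * (- B * \<tau>' * exp (- \<tau>' * (bb - 1)))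
       = \<phi> bb * (B * \<tau>' * dR)" unfolding ebb by simp
    have rhs: "\<phi>' 1 * (B * (exp (- \<tau>' * (1 - 1)) - dR)) - \<phi> 1 * (- B * \<tau>' * exp (- \<tau>' * (1 - 1)))
       = \<phi>' 1 * (B * (1 - dR)) + \<phi> 1 * (B * \<tau>')" unfolding e1 by (simp add: algebra_simps)
    have WRb: "\<phi> bb * (B * \<tau>' * dR) > 0"
      using phipos[of bb] B tau' dR by simp
    have WR1: "\<phi>' 1 * cos (k - \<beta>) + \<phi> 1 * (k * sin (k - \<beta>)) > 0"
      using WR WRb unfolding lhs rhs R0 R1 by simp
    show False using WR1 WM' WL0 by simp
  qed
qed


lemma deriv_split_loc:
  fixes f g1 g2 :: "real \<Rightarrow> real"
  assumes "(g1 has_real_derivative D) (at x)" "(g2 has_real_derivative D) (at x)" "d > 0"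
    and "\<And>y. x - d < y \<Longrightarrow> y \<le> x \<Longrightarrow> f y = g1 y" "\<And>y. x \<le> y \<Longrightarrow> y < x + d \<Longrightarrow> f y = g2 y"
  shows "(f has_real_derivative D) (at x)"
proof -
  define h where "h = (\<lambda>y. if y \<le> x then g1 y else g2 y)"
  have gx: "g1 x = g2 x"
  proof -
    have "f x = g1 x" using assms(3) by (intro assms(4)) auto
    moreover have "f x = g2 x" using assms(3) by (intro assms(5)) auto
    ultimately show ?thesis by simp
  qed
  have "(h has_real_derivative D) (at x)"
    by (rule deriv_split[OF assms(1,2)]) (use gx in \<open>auto simp: h_def\<close>)
  thus ?thesis
  proof (rule has_field_derivative_transform_within_open[where S="{x-d<..<x+d}"])
    show "open {x-d<..<x+d}" by simp
    show "x \<in> {x-d<..<x+d}" using assms(3) by simp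
    fix y assume y: "y \<in> {x-d<..<x+d}"
    show "h y = f y"
    proof (cases "y \<le> x")
      case True thus ?thesis using y assms(4)[of y] by (simp add: h_def)
    next
      case False thus ?thesis using y assms(5)[of y] by (simp add: h_def)
    qed
  qed
qed

lemma isCont_transform_open:
  fixes f g :: "real \<Rightarrow> real"
  assumes "isCont g x" "open S" "x \<in> S" "\<And>y. y \<in> S \<Longrightarrow> f y = g y"
  shows "isCont f x"
proof -
  have "(g \<longlongrightarrow> f x) (at x)" using assms(1,3,4) by (simp add: isCont_def)
  hence "(f \<longlongrightarrow> f x) (at x)"
    by (rule Lim_transform_within_open[OF _ assms(2,3)]) (simp add: assms(4))
  thus ?thesis by (simp add: isCont_def)
qed

lemma cont_split_loc:
  fixes f g1 g2 :: "real \<Rightarrow> real"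
  assumes "isCont g1 x" "isCont g2 x" "d > 0"
    and "\<And>y. x - d < y \<Longrightarrow> y \<le> x \<Longrightarrow> f y = g1 y" "\<And>y. x \<le> y \<Longrightarrow> y < x + d \<Longrightarrow> f y = g2 y"
  shows "isCont f x"
proof -
  define h where "h = (\<lambda>y. if y \<le> x then g1 y else g2 y)"
  have gx: "g1 x = g2 x"
  proof -
    have "f x = g1 x" using assms(3) by (intro assms(4)) auto
    moreover have "f x = g2 x" using assms(3) by (intro assms(5)) auto
    ultimately show ?thesis by simp
  qed
  have "isCont h x"
    by (rule cont_split[OF assms(1,2)]) (use gx in \<open>auto simp: h_def\<close>)
  thus ?thesis
  proof (rule isCont_transform_open[where S="{x-d<..<x+d}"])
    show "open {x-d<..<x+d}" by simp
    show "x \<in> {x-d<..<x+d}" using assms(3) by simp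
    fix y assume y: "y \<in> {x-d<..<x+d}"
    show "f y = h y"
    proof (cases "y \<le> x")
      case True thus ?thesis using y assms(4)[of y] by (simp add: h_def)
    next
      case False thus ?thesis using y assms(5)[of y] by (simp add: h_def)
    qed
  qed
qed

lemma mfun_measurable[measurable]: "mfun r1 r2 r3 \<in> borel_measurable borel"
proof -
  have "mfun r1 r2 r3 = (\<lambda>y. if y < 0 then r1 else if y < 1 then r2 else r3)"
    by (auto simp: mfun_def fun_eq_iff)
  also have "\<dots> \<in> borel_measurable borel" by measurable
  finally show ?thesis .
qed

lemma ftc_supersol:
  fixes \<phi> \<phi>' \<phi>'' :: "real \<Rightarrow> real"
  assumes d: "\<And>x. (\<phi> has_real_derivative \<phi>' x) (at x)"
    and c': "\<And>x. isCont \<phi>' x"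
    and d': "\<And>x. x \<noteq> 0 \<Longrightarrow> x \<noteq> 1 \<Longrightarrow> (\<phi>' has_real_derivative \<phi>'' x) (at x)"
    and pos: "\<And>x. \<phi> x > 0"
    and eq: "\<And>x. \<phi>'' x = L^2 * (\<mu> - mfun r1 r2 r3 x) * \<phi> x"
    and L: "L > 0" and r: "r1 > 0" "r2 > 0" "r3 > 0"
  shows "supersol r1 r2 r3 L (- \<mu>) \<phi>"
proof -
  have cphi: "continuous_on S \<phi>" for S
    by (rule continuous_at_imp_continuous_on) (use d DERIV_isCont in blast)
  have meas: "\<phi>'' \<in> borel_measurable borel"
  proof -
    have "\<phi> \<in> borel_measurable borel" by (rule borel_measurable_continuous_onI[OF cphi])
    hence "(\<lambda>x. L^2 * (\<mu> - mfun r1 r2 r3 x) * \<phi> x) \<in> borel_measurable borel" by measurable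
    moreover have "\<phi>'' = (\<lambda>x. L^2 * (\<mu> - mfun r1 r2 r3 x) * \<phi> x)" by (rule ext) (rule eq)
    ultimately show ?thesis by simp
  qed
  have int: "set_integrable lborel {a..b} \<phi>''" for a b
  proof (rule set_integrable_bound[where f="\<lambda>y. L^2 * (\<bar>\<mu>\<bar> + r1 + r2 + r3) * \<phi> y"])
    show "set_integrable lborel {a..b} (\<lambda>y. L^2 * (\<bar>\<mu>\<bar> + r1 + r2 + r3) * \<phi> y)"
      by (rule borel_integrable_atLeastAtMost') (intro continuous_intros cphi)
    show "set_borel_measurable lborel {a..b} \<phi>''"
      unfolding set_borel_measurable_def using meas by measurable
    show "AE x in lborel. x \<in> {a..b} \<longrightarrow> norm (\<phi>'' x) \<le> norm (L^2 * (\<bar>\<mu>\<bar> + r1 + r2 + r3) * \<phi> x)"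
    proof (rule AE_I2, rule impI)
      fix x
      have m: "\<bar>\<mu> - mfun r1 r2 r3 x\<bar> \<le> \<bar>\<mu>\<bar> + r1 + r2 + r3"
        using r by (auto simp: mfun_def)
      have "norm (\<phi>'' x) = L^2 * \<bar>\<mu> - mfun r1 r2 r3 x\<bar> * \<phi> x"
        using pos[of x] by (simp add: eq abs_mult)
      also have "\<dots> \<le> L^2 * (\<bar>\<mu>\<bar> + r1 + r2 + r3) * \<phi> x"
        using m pos[of x] by (intro mult_right_mono mult_left_mono) auto
      also have "\<dots> = norm (L^2 * (\<bar>\<mu>\<bar> + r1 + r2 + r3) * \<phi> x)"
        using pos[of x] r by (simp add: abs_mult)
      finally show "norm (\<phi>'' x) \<le> norm (L^2 * (\<bar>\<mu>\<bar> + r1 + r2 + r3) * \<phi> x)" .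
    qed
  qed
  have hi: "(\<phi>'' has_integral (\<phi>' b - \<phi>' a)) {a..b}" if "a \<le> b" for a b
  proof (rule fundamental_theorem_of_calculus_interior_strong[where S="{0,1}"])
    show "finite {0::real, 1}" by simp
    show "a \<le> b" by fact
    show "\<And>x. x \<in> {a<..<b} - {0, 1} \<Longrightarrow> (\<phi>' has_vector_derivative \<phi>'' x) (at x)"
      using d' by (auto simp: has_real_derivative_iff_has_vector_derivative[symmetric])
    show "continuous_on {a..b} \<phi>'" by (rule continuous_at_imp_continuous_on) (use c' in blast)
  qed
  have I: "(LBINT t=a..b. \<phi>'' t) = \<phi>' b - \<phi>' a" if "a \<le> b" for a b
    using interval_integral_eq_integral[OF that int] hi[OF that] by (simp add: integral_unique)
  have ftc: "\<phi>' x = \<phi>' 0 + (LBINT t=0..x. \<phi>'' t)" for x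
  proof (cases "0 \<le> x")
    case True
    thus ?thesis using I[OF True] by (simp add: zero_ereal_def)
  next
    case False
    hence "x \<le> 0" by simp
    have "(LBINT t=ereal 0..ereal x. \<phi>'' t) = - (LBINT t=ereal x..ereal 0. \<phi>'' t)"
      by (rule interval_integral_endpoints_reverse)
    also have "\<dots> = \<phi>' x - \<phi>' 0" using I[OF \<open>x \<le> 0\<close>] by simp
    finally show ?thesis by (simp add: zero_ereal_def)
  qed
  have ae: "AE y in lborel. \<phi>'' y / L\<^sup>2 + (mfun r1 r2 r3 y + - \<mu>) * \<phi> y \<le> 0"
  proof (rule AE_I2)
    fix y
    have "\<phi>'' y / L\<^sup>2 = (\<mu> - mfun r1 r2 r3 y) * \<phi> y" using L by (simp add: eq)
    thus "\<phi>'' y / L\<^sup>2 + (mfun r1 r2 r3 y + - \<mu>) * \<phi> y \<le> 0" by (simp add: algebra_simps)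
  qed
  show ?thesis unfolding supersol_def
    using d int ftc pos ae by blast
qed


definition pw3 :: "(real \<Rightarrow> real) \<Rightarrow> (real \<Rightarrow> real) \<Rightarrow> (real \<Rightarrow> real) \<Rightarrow> real \<Rightarrow> real" where
  "pw3 g1 g2 g3 y = (if y < 0 then g1 y else if y \<le> 1 then g2 y else g3 y)"

lemma pw3_deriv_off:
  assumes "\<And>x. (g1 has_real_derivative h1 x) (at x)" "\<And>x. (g2 has_real_derivative h2 x) (at x)"
    "\<And>x. (g3 has_real_derivative h3 x) (at x)" and x: "x \<noteq> 0" "x \<noteq> 1"
  shows "(pw3 g1 g2 g3 has_real_derivative pw3 h1 h2 h3 x) (at x)"
proof -
  consider "x < 0" | "0 < x \<and> x < 1" | "x > 1" using x by linarith
  thus ?thesis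
  proof cases
    case 1
    have e: "pw3 h1 h2 h3 x = h1 x" using 1 by (simp add: pw3_def)
    show ?thesis unfolding e
      by (rule has_field_derivative_transform_within_open[OF assms(1), where S="{..<0}"])
         (use 1 in \<open>auto simp: pw3_def\<close>)
  next
    case 2
    have e: "pw3 h1 h2 h3 x = h2 x" using 2 by (simp add: pw3_def)
    show ?thesis unfolding e
      by (rule has_field_derivative_transform_within_open[OF assms(2), where S="{0<..<1}"])
         (use 2 in \<open>auto simp: pw3_def\<close>)
  next
    case 3
    have e: "pw3 h1 h2 h3 x = h3 x" using 3 by (simp add: pw3_def)
    show ?thesis unfolding e
      by (rule has_field_derivative_transform_within_open[OF assms(3), where S="{1<..}"])
         (use 3 in \<open>auto simp: pw3_def\<close>)
  qed
qed

lemma pw3_deriv: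
  assumes d: "\<And>x. (g1 has_real_derivative h1 x) (at x)" "\<And>x. (g2 has_real_derivative h2 x) (at x)"
    "\<And>x. (g3 has_real_derivative h3 x) (at x)"
    and j: "g1 0 = g2 0" "h1 0 = h2 0" "g2 1 = g3 1" "h2 1 = h3 1"
  shows "(pw3 g1 g2 g3 has_real_derivative pw3 h1 h2 h3 x) (at x)"
proof -
  consider "x = 0" | "x = 1" | "x \<noteq> 0 \<and> x \<noteq> 1" by blast
  thus ?thesis
  proof cases
    case 1
    have "(pw3 g1 g2 g3 has_real_derivative h2 0) (at 0)"
    proof (rule deriv_split_loc[where d=1])
      show "(g1 has_real_derivative h2 0) (at 0)" using d(1)[of 0] j(2) by simp
      show "(g2 has_real_derivative h2 0) (at 0)" by (rule d(2))
      show "\<And>y. 0 - 1 < y \<Longrightarrow> y \<le> 0 \<Longrightarrow> pw3 g1 g2 g3 y = g1 y"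
        using j(1) by (auto simp: pw3_def)
      show "\<And>y. 0 \<le> y \<Longrightarrow> y < 0 + 1 \<Longrightarrow> pw3 g1 g2 g3 y = g2 y"
        by (auto simp: pw3_def)
    qed simp
    thus ?thesis using 1 by (simp add: pw3_def)
  next
    case 2
    have "(pw3 g1 g2 g3 has_real_derivative h2 1) (at 1)"
    proof (rule deriv_split_loc[where d=1])
      show "(g2 has_real_derivative h2 1) (at 1)" by (rule d(2))
      show "(g3 has_real_derivative h2 1) (at 1)" using d(3)[of 1] j(4) by simp
      show "\<And>y. 1 - 1 < y \<Longrightarrow> y \<le> 1 \<Longrightarrow> pw3 g1 g2 g3 y = g2 y"
        by (auto simp: pw3_def)
      show "\<And>y. 1 \<le> y \<Longrightarrow> y < 1 + 1 \<Longrightarrow> pw3 g1 g2 g3 y = g3 y"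
        using j(3) by (auto simp: pw3_def)
    qed simp
    thus ?thesis using 2 by (simp add: pw3_def)
  next
    case 3
    thus ?thesis using pw3_deriv_off[OF d] by blast
  qed
qed

lemma pw3_cont:
  assumes c: "\<And>x. isCont g1 x" "\<And>x. isCont g2 x" "\<And>x. isCont g3 x"
    and j: "g1 0 = g2 0" "g2 1 = g3 1"
  shows "isCont (pw3 g1 g2 g3) x"
proof -
  consider "x = 0" | "x = 1" | "x < 0" | "0 < x \<and> x < 1" | "1 < x" by linarith
  thus ?thesis
  proof cases
    case 1
    have "isCont (pw3 g1 g2 g3) 0"
      by (rule cont_split_loc[OF c(1,2), where d=1]) (use j in \<open>auto simp: pw3_def\<close>)
    thus ?thesis using 1 by simp
  next
    case 2
    have "isCont (pw3 g1 g2 g3) 1"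
      by (rule cont_split_loc[OF c(2,3), where d=1]) (use j in \<open>auto simp: pw3_def\<close>)
    thus ?thesis using 2 by simp
  next
    case 3
    show ?thesis
      by (rule isCont_transform_open[OF c(1), where S="{..<0}"]) (use 3 in \<open>auto simp: pw3_def\<close>)
  next
    case 4
    show ?thesis
      by (rule isCont_transform_open[OF c(2), where S="{0<..<1}"]) (use 4 in \<open>auto simp: pw3_def\<close>)
  next
    case 5
    show ?thesis
      by (rule isCont_transform_open[OF c(3), where S="{1<..}"]) (use 5 in \<open>auto simp: pw3_def\<close>)
  qed
qed


lemma F4:
  assumes L: "L > 0" and r: "r1 > 0" "r2 > 0" "r3 > 0"
    and M: "max r1 r3 < \<mu>" and mu: "\<mu> < r2" and small: "L \<le> Lf r1 r2 r3 \<mu>"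
  shows "\<exists>\<phi>. supersol r1 r2 r3 L (- \<mu>) \<phi>"
proof -
  define a where "a = sqrt (r2 - \<mu>)"
  have a: "a > 0" using mu by (simp add: a_def)
  define k where "k = L * a"
  have k: "k > 0" using a L by (simp add: k_def)
  define \<theta>1 where "\<theta>1 = arctan (sqrt ((\<mu> - r1) / (r2 - \<mu>)))"
  define \<theta>3 where "\<theta>3 = arctan (sqrt ((\<mu> - r3) / (r2 - \<mu>)))"
  define \<kappa>1 where "\<kappa>1 = L * sqrt (\<mu> - r1)"
  define \<kappa>3 where "\<kappa>3 = L * sqrt (\<mu> - r3)"
  have th1: "0 \<le> \<theta>1" "\<theta>1 < pi/2" using M mu arctan_ubound[of "sqrt ((\<mu> - r1) / (r2 - \<mu>))"] by (auto simp: \<theta>1_def)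
  have th3: "0 \<le> \<theta>3" "\<theta>3 < pi/2" using M mu arctan_ubound[of "sqrt ((\<mu> - r3) / (r2 - \<mu>))"] by (auto simp: \<theta>3_def)
  have ka: "\<kappa>1 > 0" "\<kappa>3 > 0" using M L by (auto simp: \<kappa>1_def \<kappa>3_def)
  have kt1: "k * tan \<theta>1 = \<kappa>1" unfolding k_def a_def \<theta>1_def \<kappa>1_def using ktan[OF L _ mu] M by simp
  have kt3: "k * tan \<theta>3 = \<kappa>3" unfolding k_def a_def \<theta>3_def \<kappa>3_def using ktan[OF L _ mu] M by simp
  have ksmall: "k \<le> \<theta>1 + \<theta>3"
  proof -
    have "L \<le> (\<theta>1 + \<theta>3) / a" using small by (simp add: Lf_def \<theta>1_def \<theta>3_def a_def)
    thus ?thesis using a by (simp add: k_def le_divide_eq mult.commute)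
  qed
  have sq1: "\<kappa>1^2 = L^2 * (\<mu> - r1)" using M by (simp add: \<kappa>1_def power_mult_distrib)
  have sq2: "k^2 = L^2 * (r2 - \<mu>)" using mu by (simp add: k_def a_def power_mult_distrib)
  have sq3: "\<kappa>3^2 = L^2 * (\<mu> - r3)" using M by (simp add: \<kappa>3_def power_mult_distrib)
  have c1: "cos \<theta>1 > 0" using th1 by (intro cos_gt_zero_pi) auto
  define C where "C = cos (k - \<theta>1)"
  define S where "S = sin (k - \<theta>1)"
  have C: "C > 0" unfolding C_def using th1 th3 ksmall k by (intro cos_gt_zero_pi) auto
  have SC: "k * S / \<kappa>3 \<le> C"
  proof -
    have "tan (k - \<theta>1) \<le> tan \<theta>3"
    proof (cases "k - \<theta>1 = \<theta>3")
      case False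
      hence "k - \<theta>1 < \<theta>3" using ksmall by simp
      thus ?thesis using th1 th3 k by (intro less_imp_le tan_monotone) auto
    qed simp
    hence "k * tan (k - \<theta>1) \<le> \<kappa>3" using k kt3 by (metis mult_left_mono less_imp_le)
    hence "k * S / C \<le> \<kappa>3" by (simp add: S_def C_def tan_def)
    hence "k * S \<le> \<kappa>3 * C" using C by (simp add: divide_le_eq)
    thus ?thesis using ka by (simp add: divide_le_eq mult.commute)
  qed
  define g1 where "g1 = (\<lambda>y. cos \<theta>1 * exp (\<kappa>1 * y))"
  define h1 where "h1 = (\<lambda>y. \<kappa>1 * cos \<theta>1 * exp (\<kappa>1 * y))"
  define g2 where "g2 = (\<lambda>y. cos (k * y - \<theta>1))"
  define h2 where "h2 = (\<lambda>y. - k * sin (k * y - \<theta>1))"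
  define g3 where "g3 = (\<lambda>y. C * cosh (\<kappa>3 * (y - 1)) - k * S / \<kappa>3 * sinh (\<kappa>3 * (y - 1)))"
  define h3 where "h3 = (\<lambda>y. \<kappa>3 * C * sinh (\<kappa>3 * (y - 1)) - k * S * cosh (\<kappa>3 * (y - 1)))"
  have dg1: "(g1 has_real_derivative h1 x) (at x)" for x
    unfolding g1_def h1_def by (auto intro!: derivative_eq_intros)
  have dg2: "(g2 has_real_derivative h2 x) (at x)" for x
    unfolding g2_def h2_def by (auto intro!: derivative_eq_intros)
  have dg3: "(g3 has_real_derivative h3 x) (at x)" for x
    unfolding g3_def h3_def using ka by (auto intro!: derivative_eq_intros)
  have dh1: "(h1 has_real_derivative \<kappa>1^2 * g1 x) (at x)" for x
    unfolding g1_def h1_def by (auto intro!: derivative_eq_intros simp: power2_eq_square)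
  have dh2: "(h2 has_real_derivative - (k^2) * g2 x) (at x)" for x
    unfolding g2_def h2_def by (auto intro!: derivative_eq_intros simp: power2_eq_square)
  have dh3: "(h3 has_real_derivative \<kappa>3^2 * g3 x) (at x)" for x
    unfolding g3_def h3_def using ka by (auto intro!: derivative_eq_intros simp: power2_eq_square algebra_simps)
  have j1: "g1 0 = g2 0" by (simp add: g1_def g2_def)
  have j2: "h1 0 = h2 0"
  proof -
    have "h1 0 = k * tan \<theta>1 * cos \<theta>1" by (simp add: h1_def kt1)
    also have "\<dots> = k * sin \<theta>1" using c1 by (simp add: tan_def)
    finally show ?thesis by (simp add: h2_def)
  qed
  have j3: "g2 1 = g3 1" by (simp add: g2_def g3_def C_def)
  have j4: "h2 1 = h3 1" by (simp add: h2_def h3_def S_def)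
  define \<phi> where "\<phi> = pw3 g1 g2 g3"
  define \<phi>' where "\<phi>' = pw3 h1 h2 h3"
  define \<phi>'' where "\<phi>'' = (\<lambda>x. L^2 * (\<mu> - mfun r1 r2 r3 x) * \<phi> x)"
  have "supersol r1 r2 r3 L (- \<mu>) \<phi>"
  proof (rule ftc_supersol[where \<phi>'=\<phi>' and \<phi>''=\<phi>''])
    show "\<And>x. (\<phi> has_real_derivative \<phi>' x) (at x)"
      unfolding \<phi>_def \<phi>'_def by (rule pw3_deriv[OF dg1 dg2 dg3 j1 j2 j3 j4])
    show "\<And>x. isCont \<phi>' x" unfolding \<phi>'_def
      by (rule pw3_cont[OF DERIV_isCont[OF dh1] DERIV_isCont[OF dh2] DERIV_isCont[OF dh3] j2 j4])
    show "\<And>x. x \<noteq> 0 \<Longrightarrow> x \<noteq> 1 \<Longrightarrow> (\<phi>' has_real_derivative \<phi>'' x) (at x)"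
    proof -
      fix x :: real assume x: "x \<noteq> 0" "x \<noteq> 1"
      have "(\<phi>' has_real_derivative pw3 (\<lambda>x. \<kappa>1^2 * g1 x) (\<lambda>x. - (k^2) * g2 x) (\<lambda>x. \<kappa>3^2 * g3 x) x) (at x)"
        unfolding \<phi>'_def by (rule pw3_deriv_off[OF dh1 dh2 dh3 x])
      moreover have "pw3 (\<lambda>x. \<kappa>1^2 * g1 x) (\<lambda>x. - (k^2) * g2 x) (\<lambda>x. \<kappa>3^2 * g3 x) x = \<phi>'' x"
        using x by (auto simp: pw3_def \<phi>''_def \<phi>_def mfun_def sq1 sq2 sq3 algebra_simps)
      ultimately show "(\<phi>' has_real_derivative \<phi>'' x) (at x)" by simp
    qed
    show "\<And>x. 0 < \<phi> x"
    proof -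
      fix x :: real
      consider "x < 0" | "0 \<le> x \<and> x \<le> 1" | "x > 1" by linarith
      thus "0 < \<phi> x"
      proof cases
        case 1 thus ?thesis using c1 by (simp add: \<phi>_def pw3_def g1_def)
      next
        case 2
        have "k * x \<le> k" using 2 k by (simp add: mult_le_cancel_left1)
        moreover have "0 \<le> k * x" using 2 k by simp
        ultimately have "0 < cos (k * x - \<theta>1)" using th1 th3 ksmall by (intro cos_gt_zero_pi) auto
        thus ?thesis using 2 by (simp add: \<phi>_def pw3_def g2_def)
      next
        case 3
        define u where "u = \<kappa>3 * (x - 1)"
        have u: "u \<ge> 0" using 3 ka by (simp add: u_def)
        have "C * cosh u - C * sinh u \<le> C * cosh u - k * S / \<kappa>3 * sinh u"
          using SC u by (intro diff_left_mono mult_right_mono) auto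
        moreover have "C * cosh u - C * sinh u = C * exp (- u)"
          by (simp add: cosh_minus_sinh[symmetric] algebra_simps)
        moreover have "C * exp (- u) > 0" using C by simp
        ultimately have "0 < C * cosh u - k * S / \<kappa>3 * sinh u" by linarith
        thus ?thesis using 3 by (simp add: \<phi>_def pw3_def g3_def u_def)
      qed
    qed
  qed (use L r in \<open>auto simp: \<phi>''_def\<close>)
  thus ?thesis by blast
qed


lemma arccot_pos:
  fixes x :: real assumes x: "x > 0"
  shows "arccot x = arctan (1 / x)"
proof -
  define z where "z = arctan (1 / x)"
  have z: "0 < z" "z < pi/2" using x arctan_ubound[of "1/x"] by (auto simp: z_def)
  have cz: "cos z > 0" using z by (intro cos_gt_zero_pi) auto
  have sz: "sin z > 0" using z by (intro sin_gt_zero) auto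
  have tz: "sin z / cos z = 1 / x" using tan_arctan[of "1/x"] by (simp add: z_def tan_def)
  have cotz: "cot z = x"
  proof -
    have "sin z = cos z / x" using tz cz by (simp add: field_simps)
    thus ?thesis using cz x by (simp add: cot_def)
  qed
  show ?thesis unfolding arccot_def z_def[symmetric]
  proof (rule the_equality)
    show "0 < z \<and> z < pi \<and> cot z = x" using z cotz by simp
  next
    fix y assume y: "0 < y \<and> y < pi \<and> cot y = x"
    have sy: "sin y > 0" using y by (intro sin_gt_zero) auto
    have "cos y / sin y = cos z / sin z" using y cotz by (simp add: cot_def)
    hence "cos y * sin z = cos z * sin y" using sy sz by (simp add: field_simps)
    hence "sin (z - y) = 0" by (simp add: sin_diff mult.commute)
    moreover have "- pi < z - y" "z - y < pi" using y z by auto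
    ultimately have "z - y = 0" using sin_eq_0_pi by blast
    thus "y = z" by simp
  qed
qed

context
  fixes r1 r2 r3 :: real
  assumes pos: "r1 > 0" "r2 > 0" "r3 > 0" and big: "r2 > max r1 r3"
begin

lemma ratio_less:
  assumes "r \<le> m1" "m1 < m2" "m2 < r2" "r < r2"
  shows "(m1 - r) / (r2 - m1) < (m2 - r) / (r2 - m2)"
proof -
  have "(m2 - r) * (r2 - m1) - (m1 - r) * (r2 - m2) = (m2 - m1) * (r2 - r)" by (simp add: algebra_simps)
  moreover have "(m2 - m1) * (r2 - r) > 0" using assms by simp
  ultimately have "(m1 - r) * (r2 - m2) < (m2 - r) * (r2 - m1)" by simp
  thus ?thesis using assms by (simp add: field_simps)
qed

lemma Lf_strict:
  assumes "max r1 r3 \<le> m1" "m1 < m2" "m2 < r2"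
  shows "Lf r1 r2 r3 m1 < Lf r1 r2 r3 m2"
proof -
  define N where "N = (\<lambda>m. arctan (sqrt ((m - r1) / (r2 - m))) + arctan (sqrt ((m - r3) / (r2 - m))))"
  have "arctan (sqrt ((m1 - r1) / (r2 - m1))) < arctan (sqrt ((m2 - r1) / (r2 - m2)))"
    using ratio_less[of r1 m1 m2] assms big by (simp add: arctan_less_iff)
  moreover have "arctan (sqrt ((m1 - r3) / (r2 - m1))) < arctan (sqrt ((m2 - r3) / (r2 - m2)))"
    using ratio_less[of r3 m1 m2] assms big by (simp add: arctan_less_iff)
  ultimately have N: "N m1 < N m2" by (simp add: N_def)
  have N0: "N m1 \<ge> 0" using assms by (simp add: N_def)
  have s: "0 < sqrt (r2 - m2)" "sqrt (r2 - m2) < sqrt (r2 - m1)" using assms by auto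
  have "N m1 / sqrt (r2 - m1) \<le> N m1 / sqrt (r2 - m2)"
    using s N0 by (intro divide_left_mono) auto
  also have "\<dots> < N m2 / sqrt (r2 - m2)" using N s by (simp add: divide_strict_right_mono)
  finally show ?thesis by (simp add: Lf_def N_def)
qed

lemma Lf_mono:
  assumes "max r1 r3 \<le> m1" "m1 \<le> m2" "m2 < r2"
  shows "Lf r1 r2 r3 m1 \<le> Lf r1 r2 r3 m2"
  using Lf_strict[of m1 m2] assms by (cases "m1 = m2") auto

lemma Lf_nonneg:
  assumes "max r1 r3 \<le> m" "m < r2"
  shows "Lf r1 r2 r3 m \<ge> 0"
  using assms by (simp add: Lf_def)

lemma Lf_cont:
  assumes "b < r2"
  shows "continuous_on {a..b} (Lf r1 r2 r3)"
proof -
  have "\<And>m. m \<in> {a..b} \<Longrightarrow> r2 - m \<noteq> 0" "\<And>m. m \<in> {a..b} \<Longrightarrow> sqrt (r2 - m) \<noteq> 0"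
    using assms by auto
  thus ?thesis unfolding Lf_def[abs_def]
    by (intro continuous_intros) auto
qed

lemma Lunder_eq: "Lf r1 r2 r3 (max r1 r3) = Lunder r1 r2 r3"
proof (cases "r1 = r3")
  case True
  thus ?thesis by (simp add: Lf_def Lunder_def)
next
  case False
  define M where "M = max r1 r3"
  have d: "r2 - M > 0" using big by (simp add: M_def)
  have ab: "\<bar>r1 - r3\<bar> > 0" using False by simp
  have "arctan (sqrt ((M - r1) / (r2 - M))) + arctan (sqrt ((M - r3) / (r2 - M)))
      = arctan (sqrt (\<bar>r1 - r3\<bar> / (r2 - M)))"
    by (cases "r1 \<le> r3") (auto simp: M_def)
  also have "\<dots> = arccot (sqrt ((r2 - M) / \<bar>r1 - r3\<bar>))"
  proof -
    have "sqrt ((r2 - M) / \<bar>r1 - r3\<bar>) > 0" using d ab by simp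
    hence "arccot (sqrt ((r2 - M) / \<bar>r1 - r3\<bar>)) = arctan (1 / sqrt ((r2 - M) / \<bar>r1 - r3\<bar>))"
      by (rule arccot_pos)
    also have "1 / sqrt ((r2 - M) / \<bar>r1 - r3\<bar>) = sqrt (\<bar>r1 - r3\<bar> / (r2 - M))"
      by (simp add: real_sqrt_divide)
    finally show ?thesis by simp
  qed
  finally show ?thesis using False by (simp add: Lf_def Lunder_def M_def)
qed

lemma Lunder_nonneg: "Lunder r1 r2 r3 \<ge> 0"
  using Lunder_eq Lf_nonneg[of "max r1 r3"] big by simp

lemma Lf_unbounded: "\<exists>m. max r1 r3 < m \<and> m < r2 \<and> Lf r1 r2 r3 m > L"
proof -
  define M where "M = max r1 r3"
  define m0 where "m0 = (M + r2) / 2"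
  have m0: "M < m0" "m0 < r2" using big by (auto simp: m0_def M_def)
  define N0 where "N0 = arctan (sqrt ((m0 - r1) / (r2 - m0))) + arctan (sqrt ((m0 - r3) / (r2 - m0)))"
  have N0: "N0 > 0"
  proof -
    have "sqrt ((m0 - r1) / (r2 - m0)) > 0" using m0 by (simp add: M_def)
    hence "arctan (sqrt ((m0 - r1) / (r2 - m0))) > 0" using arctan_less_iff[of 0] by simp
    moreover have "arctan (sqrt ((m0 - r3) / (r2 - m0))) \<ge> 0" using m0 by (simp add: M_def)
    ultimately show ?thesis unfolding N0_def by (rule add_pos_nonneg)
  qed
  define c where "c = N0 / (2 * (\<bar>L\<bar> + 1))"
  have c: "c > 0" using N0 by (simp add: c_def)
  define \<delta> where "\<delta> = min ((r2 - M) / 2) (c^2)"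
  have \<delta>: "\<delta> > 0" using big c by (simp add: \<delta>_def M_def)
  define m where "m = r2 - \<delta>"
  have d1: "\<delta> \<le> (r2 - M) / 2" unfolding \<delta>_def by (rule min.cobounded1)
  have MB: "M < r2" using big by (simp add: M_def)
  have m: "M < m" "m < r2" "m0 \<le> m" using d1 \<delta> MB unfolding m_def m0_def by argo+
  have sq: "sqrt \<delta> \<le> c"
  proof -
    have "sqrt \<delta> \<le> sqrt (c^2)" by (simp add: \<delta>_def del: real_sqrt_abs)
    thus ?thesis using c by simp
  qed
  have sqp: "sqrt \<delta> > 0" using \<delta> by simp
  have "N0 / sqrt (r2 - m0) = Lf r1 r2 r3 m0" by (simp add: Lf_def N0_def)
  have "N0 \<le> Lf r1 r2 r3 m * sqrt (r2 - m)"
  proof -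
    have "arctan (sqrt ((m0 - r1) / (r2 - m0))) \<le> arctan (sqrt ((m - r1) / (r2 - m)))"
      using ratio_less[of r1 m0 m] m m0 big by (cases "m0 = m") (auto simp: arctan_le_iff M_def less_imp_le)
    moreover have "arctan (sqrt ((m0 - r3) / (r2 - m0))) \<le> arctan (sqrt ((m - r3) / (r2 - m)))"
      using ratio_less[of r3 m0 m] m m0 big by (cases "m0 = m") (auto simp: arctan_le_iff M_def less_imp_le)
    ultimately show ?thesis using m by (simp add: N0_def Lf_def)
  qed
  hence "N0 / sqrt \<delta> \<le> Lf r1 r2 r3 m" using sqp by (simp add: m_def divide_le_eq)
  moreover have "N0 / c \<le> N0 / sqrt \<delta>" using sq sqp N0 c by (intro divide_left_mono) auto
  moreover have "N0 / c = 2 * (\<bar>L\<bar> + 1)" using N0 by (simp add: c_def)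
  ultimately have "Lf r1 r2 r3 m \<ge> 2 * (\<bar>L\<bar> + 1)" by linarith
  hence "Lf r1 r2 r3 m > L" using abs_ge_self[of L] abs_ge_zero[of L] by argo
  thus ?thesis using m by (auto simp: M_def)
qed

end


definition mstar :: "real \<Rightarrow> real \<Rightarrow> real \<Rightarrow> real \<Rightarrow> real" where
  "mstar r1 r2 r3 L = (if L \<le> Lunder r1 r2 r3 then max r1 r3
     else (THE m. max r1 r3 < m \<and> m < r2 \<and> Lf r1 r2 r3 m = L))"

context
  fixes r1 r2 r3 :: real
  assumes pos: "r1 > 0" "r2 > 0" "r3 > 0" and big: "r2 > max r1 r3"
begin

lemma mstar_prop:
  assumes L: "L > Lunder r1 r2 r3"
  shows "max r1 r3 < mstar r1 r2 r3 L \<and> mstar r1 r2 r3 L < r2 \<and> Lf r1 r2 r3 (mstar r1 r2 r3 L) = L"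
proof -
  define M where "M = max r1 r3"
  have ex: "\<exists>m. M < m \<and> m < r2 \<and> Lf r1 r2 r3 m = L"
  proof -
    obtain mb where mb: "M < mb" "mb < r2" "Lf r1 r2 r3 mb > L"
      using Lf_unbounded[OF pos big, of L] by (auto simp: M_def)
    have "\<exists>m. M \<le> m \<and> m \<le> mb \<and> Lf r1 r2 r3 m = L"
    proof (rule IVT')
      show "Lf r1 r2 r3 M \<le> L" using Lunder_eq[OF pos big] L by (simp add: M_def)
      show "L \<le> Lf r1 r2 r3 mb" using mb by simp
      show "M \<le> mb" using mb by simp
      show "continuous_on {M..mb} (Lf r1 r2 r3)" using Lf_cont[OF pos big] mb by simp
    qed
    then obtain m where m: "M \<le> m" "m \<le> mb" "Lf r1 r2 r3 m = L" by blast
    have "m \<noteq> M" using m(3) Lunder_eq[OF pos big] L by (auto simp: M_def)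
    thus ?thesis using m mb by (intro exI[of _ m]) auto
  qed
  have un: "m1 = m2" if "M < m1 \<and> m1 < r2 \<and> Lf r1 r2 r3 m1 = L" "M < m2 \<and> m2 < r2 \<and> Lf r1 r2 r3 m2 = L" for m1 m2
  proof (rule ccontr)
    assume "m1 \<noteq> m2"
    hence "m1 < m2 \<or> m2 < m1" by auto
    thus False using Lf_strict[OF pos big, of m1 m2] Lf_strict[OF pos big, of m2 m1] that
      by (auto simp: M_def)
  qed
  have "\<exists>!m. M < m \<and> m < r2 \<and> Lf r1 r2 r3 m = L" using ex un by blast
  hence "M < (THE m. M < m \<and> m < r2 \<and> Lf r1 r2 r3 m = L) \<and> (THE m. M < m \<and> m < r2 \<and> Lf r1 r2 r3 m = L) < r2
    \<and> Lf r1 r2 r3 (THE m. M < m \<and> m < r2 \<and> Lf r1 r2 r3 m = L) = L"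
    by (rule theI')
  thus ?thesis using L by (simp add: mstar_def M_def)
qed

lemma mstar_low: "L \<le> Lunder r1 r2 r3 \<Longrightarrow> mstar r1 r2 r3 L = max r1 r3"
  by (simp add: mstar_def)

lemma mstar_bounds: "max r1 r3 \<le> mstar r1 r2 r3 L" "mstar r1 r2 r3 L < r2"
  using mstar_prop[of L] mstar_low[of L] big by (cases "L \<le> Lunder r1 r2 r3"; auto)+

lemma mstar_less_iff:
  assumes "max r1 r3 \<le> m" "m < r2" "L > Lunder r1 r2 r3"
  shows "mstar r1 r2 r3 L \<le> m \<longleftrightarrow> L \<le> Lf r1 r2 r3 m"
proof -
  have p: "max r1 r3 < mstar r1 r2 r3 L" "mstar r1 r2 r3 L < r2" "Lf r1 r2 r3 (mstar r1 r2 r3 L) = L"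
    using mstar_prop[OF assms(3)] by auto
  show ?thesis
  proof
    assume "mstar r1 r2 r3 L \<le> m"
    thus "L \<le> Lf r1 r2 r3 m" using Lf_mono[OF pos big, of "mstar r1 r2 r3 L" m] p assms by auto
  next
    assume a: "L \<le> Lf r1 r2 r3 m"
    show "mstar r1 r2 r3 L \<le> m"
    proof (rule ccontr)
      assume "\<not> mstar r1 r2 r3 L \<le> m"
      hence "Lf r1 r2 r3 m < Lf r1 r2 r3 (mstar r1 r2 r3 L)"
        using Lf_strict[OF pos big, of m "mstar r1 r2 r3 L"] p assms by auto
      thus False using a p by simp
    qed
  qed
qed

lemma mstar_cont: "isCont (mstar r1 r2 r3) L0"
proof -
  define M where "M = max r1 r3"
  define m0 where "m0 = mstar r1 r2 r3 L0"
  have m0: "M \<le> m0" "m0 < r2" using mstar_bounds by (auto simp: m0_def M_def)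
  have MLu: "Lf r1 r2 r3 M = Lunder r1 r2 r3" using Lunder_eq[OF pos big] by (simp add: M_def)
  show ?thesis unfolding isCont_def LIM_eq
  proof (intro allI impI)
    fix e :: real assume e: "e > 0"
    define m1 where "m1 = min (m0 + e/2) ((m0 + r2) / 2)"
    have m1: "m0 < m1" "m1 < r2" "m1 \<le> m0 + e/2" using m0 e by (auto simp: m1_def min_def field_simps)
    have Lm1: "Lf r1 r2 r3 m1 > L0"
    proof (cases "L0 \<le> Lunder r1 r2 r3")
      case True
      have "Lf r1 r2 r3 M < Lf r1 r2 r3 m1" using Lf_strict[OF pos big, of M m1] m0 m1 by (simp add: M_def)
      thus ?thesis using True MLu by simp
    next
      case False
      have p: "Lf r1 r2 r3 m0 = L0" using mstar_prop[of L0] False by (simp add: m0_def)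
      have "Lf r1 r2 r3 m0 < Lf r1 r2 r3 m1" using Lf_strict[OF pos big, of m0 m1] m0 m1 by (simp add: M_def)
      thus ?thesis using p by simp
    qed
    define d1 where "d1 = Lf r1 r2 r3 m1 - L0"
    have d1: "d1 > 0" using Lm1 by (simp add: d1_def)
    have up: "mstar r1 r2 r3 L < m1" if "L < L0 + d1" for L
    proof (cases "L \<le> Lunder r1 r2 r3")
      case True thus ?thesis using mstar_low m0 m1 by (simp add: M_def)
    next
      case False
      have Ll: "L < Lf r1 r2 r3 m1" using that by (simp add: d1_def)
      hence le: "mstar r1 r2 r3 L \<le> m1" using mstar_less_iff[of m1 L] m0 m1 False by (simp add: M_def)
      have "mstar r1 r2 r3 L \<noteq> m1"
      proof
        assume "mstar r1 r2 r3 L = m1"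
        hence "Lf r1 r2 r3 m1 = L" using mstar_prop[of L] False by simp
        thus False using Ll by simp
      qed
      thus ?thesis using le by simp
    qed
    obtain d2 where d2: "d2 > 0" "\<And>L. L > L0 - d2 \<Longrightarrow> mstar r1 r2 r3 L > m0 - e"
    proof (cases "m0 = M")
      case True
      show ?thesis
      proof (rule that[of 1])
        fix L
        have "M \<le> mstar r1 r2 r3 L" unfolding M_def by (rule mstar_bounds)
        thus "mstar r1 r2 r3 L > m0 - e" using True e by simp
      qed simp
    next
      case False
      hence gt: "M < m0" using m0 by simp
      have L0u: "L0 > Lunder r1 r2 r3"
      proof (rule ccontr)
        assume "\<not> ?thesis"
        hence "m0 = M" using mstar_low[of L0] by (simp add: m0_def M_def)
        thus False using gt by simp
      qed
      have p: "Lf r1 r2 r3 m0 = L0" using mstar_prop[OF L0u] by (simp add: m0_def)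
      define m2 where "m2 = max (m0 - e/2) M"
      have m2: "M \<le> m2" "m2 < m0" "m0 - e/2 \<le> m2" using gt e by (auto simp: m2_def max_def field_simps)
      have "Lf r1 r2 r3 m2 < L0" using Lf_strict[OF pos big, of m2 m0] m2 m0 p by (simp add: M_def)
      show ?thesis
      proof (rule that[of "L0 - Lf r1 r2 r3 m2"])
        show "L0 - Lf r1 r2 r3 m2 > 0" using \<open>Lf r1 r2 r3 m2 < L0\<close> by simp
        fix L assume L: "L0 - (L0 - Lf r1 r2 r3 m2) < L"
        hence L': "Lf r1 r2 r3 m2 < L" by simp
        have "Lf r1 r2 r3 M \<le> Lf r1 r2 r3 m2" using Lf_mono[OF pos big, of M m2] m2 m0 by (simp add: M_def)
        hence Lu: "L > Lunder r1 r2 r3" using L' MLu by simp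
        have "\<not> mstar r1 r2 r3 L \<le> m2" using mstar_less_iff[of m2 L] m2 m0 Lu L' by (simp add: M_def)
        thus "mstar r1 r2 r3 L > m0 - e" using m2 e by simp
      qed
    qed
    show "\<exists>s>0. \<forall>x. x \<noteq> L0 \<and> norm (x - L0) < s \<longrightarrow> norm (mstar r1 r2 r3 x - mstar r1 r2 r3 L0) < e"
    proof (intro exI[of _ "min d1 d2"] conjI allI impI)
      show "min d1 d2 > 0" using d1 d2 by simp
      fix L assume "L \<noteq> L0 \<and> norm (L - L0) < min d1 d2"
      hence "L < L0 + d1" "L > L0 - d2" by (auto simp: abs_less_iff)
      hence "mstar r1 r2 r3 L < m1" "mstar r1 r2 r3 L > m0 - e" using up d2 by auto
      thus "norm (mstar r1 r2 r3 L - mstar r1 r2 r3 L0) < e" using m1 e by (simp add: m0_def abs_less_iff)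
    qed
  qed
qed

end


context
  fixes r1 r2 r3 :: real
  assumes pos: "r1 > 0" "r2 > 0" "r3 > 0" and big: "r2 > max r1 r3"
begin

lemma Sset_ub:
  assumes L: "L > 0" and ss: "supersol r1 r2 r3 L lam \<phi>"
  shows "lam \<le> - mstar r1 r2 r3 L"
proof (rule ccontr)
  assume "\<not> ?thesis"
  hence lt: "- lam < mstar r1 r2 r3 L" by simp
  have M: "max r1 r3 \<le> - lam"
  proof (rule ccontr)
    assume "\<not> ?thesis"
    hence "- lam < max r1 r3" by (simp only: not_le)
    hence "lam > - max r1 r3" by linarith
    thus False using below_M[OF ss L] by simp
  qed
  have Lu: "L > Lunder r1 r2 r3"
  proof (rule ccontr)
    assume "\<not> ?thesis"
    hence "mstar r1 r2 r3 L = max r1 r3" using mstar_low[OF pos big] by simp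
    thus False using lt M by simp
  qed
  have mr: "- lam < r2" using lt mstar_bounds(2)[OF pos big, of L] by simp
  have "\<not> mstar r1 r2 r3 L \<le> - lam" using lt by simp
  hence Lbig: "L > Lf r1 r2 r3 (- lam)" using mstar_less_iff[OF pos big M mr Lu] by simp
  obtain \<phi>' where w: "weakss r1 r2 r3 L lam \<phi> \<phi>'" using supersol_weak[OF ss L] by blast
  hence w': "weakss r1 r2 r3 L (- (- lam)) \<phi> \<phi>'" by simp
  show False by (rule F5[OF w' L M mr Lbig])
qed

lemma Sset_mem:
  assumes L: "L > 0" and m: "max r1 r3 < m" "m < r2" "L \<le> Lf r1 r2 r3 m"
  shows "- m \<in> {lam. \<exists>\<phi>. supersol r1 r2 r3 L lam \<phi>}"
  using F4[OF L pos m] by simp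

lemma lambda1_eq:
  assumes L: "L > 0"
  shows "lambda1 r1 r2 r3 L = - mstar r1 r2 r3 L"
proof -
  define S where "S = {lam. \<exists>\<phi>. supersol r1 r2 r3 L lam \<phi>}"
  have ub: "\<And>x. x \<in> S \<Longrightarrow> x \<le> - mstar r1 r2 r3 L" using Sset_ub[OF L] by (auto simp: S_def)
  have "Sup S = - mstar r1 r2 r3 L"
  proof (cases "L > Lunder r1 r2 r3")
    case True
    have p: "max r1 r3 < mstar r1 r2 r3 L" "mstar r1 r2 r3 L < r2" "Lf r1 r2 r3 (mstar r1 r2 r3 L) = L"
      using mstar_prop[OF pos big True] by auto
    have "- mstar r1 r2 r3 L \<in> S" unfolding S_def by (rule Sset_mem[OF L p(1,2)]) (simp add: p(3))
    thus ?thesis using ub by (rule cSup_eq_maximum)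
  next
    case False
    hence ms: "mstar r1 r2 r3 L = max r1 r3" using mstar_low[OF pos big] by simp
    have MLu: "Lf r1 r2 r3 (max r1 r3) = Lunder r1 r2 r3" by (rule Lunder_eq[OF pos big])
    have mem: "- m \<in> S" if "max r1 r3 < m" "m < r2" for m
    proof -
      have "Lf r1 r2 r3 (max r1 r3) < Lf r1 r2 r3 m" using Lf_strict[OF pos big, of "max r1 r3" m] that by simp
      hence "L \<le> Lf r1 r2 r3 m" using False MLu by simp
      thus ?thesis unfolding S_def by (rule Sset_mem[OF L that])
    qed
    define M where "M = max r1 r3"
    have MB: "M < r2" using big by (simp add: M_def)
    show ?thesis
    proof (rule cSup_eq_non_empty)
      have "M < (M + r2) / 2" "(M + r2) / 2 < r2" using MB by (simp_all add: field_simps)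
      thus "S \<noteq> {}" using mem[of "(M + r2) / 2"] by (auto simp: M_def)
      show "\<And>x. x \<in> S \<Longrightarrow> x \<le> - mstar r1 r2 r3 L" by (rule ub)
      fix y assume yub: "\<And>x. x \<in> S \<Longrightarrow> x \<le> y"
      show "- mstar r1 r2 r3 L \<le> y"
      proof (rule ccontr)
        assume "\<not> ?thesis"
        hence y: "y < - M" using ms by (simp add: M_def)
        define m where "m = min ((M + r2) / 2) ((M - y) / 2)"
        have m: "M < m" "m < r2" "m < - y" using MB y by (auto simp: m_def min_def field_simps)
        have "- m \<le> y" using yub mem[of m] m by (simp add: M_def)
        thus False using m by simp
      qed
    qed
  qed
  thus ?thesis by (simp add: lambda1_def S_def)
qed

lemma special:
  defines "D \<equiv> 2 * r2 - r1 - r3"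
  shows "max r1 r3 < (r2\<^sup>2 - r1 * r3) / D" "(r2\<^sup>2 - r1 * r3) / D < r2"
    "Lf r1 r2 r3 ((r2\<^sup>2 - r1 * r3) / D) = pi / 2 * sqrt (D / ((r2 - r1) * (r2 - r3)))"
proof -
  define m where "m = (r2\<^sup>2 - r1 * r3) / D"
  have a: "r2 - r1 > 0" "r2 - r3 > 0" using big by auto
  have D: "D > 0" using a by (simp add: D_def)
  have e1: "m - r1 = (r2 - r1)^2 / D" using D by (simp add: m_def D_def field_simps power2_eq_square)
  have e3: "m - r3 = (r2 - r3)^2 / D" using D by (simp add: m_def D_def field_simps power2_eq_square)
  have e2: "r2 - m = (r2 - r1) * (r2 - r3) / D" using D by (simp add: m_def D_def field_simps power2_eq_square)
  have "(r2 - r1)^2 / D > 0" "(r2 - r3)^2 / D > 0" using a D by simp_all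
  hence "r1 < m" "r3 < m" using e1 e3 by simp_all
  thus "max r1 r3 < (r2\<^sup>2 - r1 * r3) / D" by (simp add: m_def[symmetric])
  have "(r2 - r1) * (r2 - r3) / D > 0" using a D by simp
  hence "m < r2" using e2 by simp
  thus "(r2\<^sup>2 - r1 * r3) / D < r2" by (simp add: m_def[symmetric])
  define x where "x = sqrt ((r2 - r1) / (r2 - r3))"
  have x: "x > 0" using a by (simp add: x_def)
  have gen: "(X^2 / D) / (X * Y / D) = X / Y" if "X > 0" "Y > 0" for X Y :: real
    using that D by (simp add: field_simps power2_eq_square)
  have q1: "(m - r1) / (r2 - m) = (r2 - r1) / (r2 - r3)"
    unfolding e1 e2 using gen a by simp
  have q3: "(m - r3) / (r2 - m) = (r2 - r3) / (r2 - r1)"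
    unfolding e3 e2 using gen[of "r2 - r3" "r2 - r1"] a by (simp add: mult.commute)
  have s3: "sqrt ((r2 - r3) / (r2 - r1)) = 1 / x" by (simp add: x_def real_sqrt_divide)
  have "arctan (1 / x) = pi / 2 - arctan x" using arctan_inverse[of x] x by (simp add: inverse_eq_divide)
  hence sum: "arctan x + arctan (1 / x) = pi / 2" by simp
  have "Lf r1 r2 r3 m = (pi / 2) / sqrt (r2 - m)"
    unfolding Lf_def q1 q3 s3 x_def[symmetric] sum ..
  also have "\<dots> = pi / 2 * sqrt (D / ((r2 - r1) * (r2 - r3)))"
    by (simp add: e2 real_sqrt_divide)
  finally show "Lf r1 r2 r3 ((r2\<^sup>2 - r1 * r3) / D) = pi / 2 * sqrt (D / ((r2 - r1) * (r2 - r3)))"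
    by (simp add: m_def)
qed

end

theorem proposition4p1:
  fixes r1 r2 r3 :: real
  assumes "r1 > 0" "r2 > 0" "r3 > 0" "r2 > max r1 r3"
  shows "continuous_on {0<..} (lambda1 r1 r2 r3) \<and>
     (\<forall>L1\<in>{0<..Lunder r1 r2 r3}. \<forall>L2\<in>{0<..Lunder r1 r2 r3}.
            lambda1 r1 r2 r3 L1 = lambda1 r1 r2 r3 L2) \<and>
     (\<forall>L1\<in>{Lunder r1 r2 r3<..}. \<forall>L2\<in>{Lunder r1 r2 r3<..}.
            L1 < L2 \<longrightarrow> lambda1 r1 r2 r3 L2 < lambda1 r1 r2 r3 L1) \<and>
     (lambda1 r1 r2 r3 \<longlongrightarrow> - max r1 r3) (at_right (Lunder r1 r2 r3)) \<and>
     lambda1 r1 r2 r3 (pi / 2 * sqrt ((2 * r2 - r1 - r3) / ((r2 - r1) * (r2 - r3))))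
           = - (r2\<^sup>2 - r1 * r3) / (2 * r2 - r1 - r3) \<and>
     (lambda1 r1 r2 r3 \<longlongrightarrow> - r2) at_top"
proof (intro conjI)
  note A = assms(1,2,3,4)
  have lam: "\<And>L. L > 0 \<Longrightarrow> lambda1 r1 r2 r3 L = - mstar r1 r2 r3 L" by (rule lambda1_eq[OF A])
  have Lu0: "Lunder r1 r2 r3 \<ge> 0" by (rule Lunder_nonneg[OF A])
  show "continuous_on {0<..} (lambda1 r1 r2 r3)"
  proof (rule continuous_on_eq)
    show "continuous_on {0<..} (\<lambda>L. - mstar r1 r2 r3 L)"
      by (intro continuous_intros continuous_at_imp_continuous_on ballI mstar_cont[OF A])
    show "\<And>x. x \<in> {0<..} \<Longrightarrow> - mstar r1 r2 r3 x = lambda1 r1 r2 r3 x" using lam by simp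
  qed
  show "\<forall>L1\<in>{0<..Lunder r1 r2 r3}. \<forall>L2\<in>{0<..Lunder r1 r2 r3}. lambda1 r1 r2 r3 L1 = lambda1 r1 r2 r3 L2"
    using lam mstar_low[OF A] by auto
  show "\<forall>L1\<in>{Lunder r1 r2 r3<..}. \<forall>L2\<in>{Lunder r1 r2 r3<..}. L1 < L2 \<longrightarrow> lambda1 r1 r2 r3 L2 < lambda1 r1 r2 r3 L1"
  proof (intro ballI impI)
    fix L1 L2 assume L1: "L1 \<in> {Lunder r1 r2 r3<..}" and L2: "L2 \<in> {Lunder r1 r2 r3<..}" and lt: "L1 < L2"
    have p1: "max r1 r3 < mstar r1 r2 r3 L1" "mstar r1 r2 r3 L1 < r2" "Lf r1 r2 r3 (mstar r1 r2 r3 L1) = L1"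
      using mstar_prop[OF A, of L1] L1 by auto
    have "\<not> mstar r1 r2 r3 L2 \<le> mstar r1 r2 r3 L1"
      using mstar_less_iff[OF A _ p1(2), of L2] p1 L2 lt by simp
    moreover have "L1 > 0" "L2 > 0" using L1 L2 Lu0 by auto
    ultimately show "lambda1 r1 r2 r3 L2 < lambda1 r1 r2 r3 L1" using lam by simp
  qed
  show "(lambda1 r1 r2 r3 \<longlongrightarrow> - max r1 r3) (at_right (Lunder r1 r2 r3))"
  proof -
    have "((\<lambda>L. - mstar r1 r2 r3 L) \<longlongrightarrow> - mstar r1 r2 r3 (Lunder r1 r2 r3)) (at (Lunder r1 r2 r3))"
      using mstar_cont[OF A, of "Lunder r1 r2 r3"] by (intro tendsto_minus) (simp add: isCont_def)
    hence "((\<lambda>L. - mstar r1 r2 r3 L) \<longlongrightarrow> - max r1 r3) (at_right (Lunder r1 r2 r3))"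
      using mstar_low[OF A, of "Lunder r1 r2 r3"] by (simp add: filterlim_at_split)
    moreover have "eventually (\<lambda>L. - mstar r1 r2 r3 L = lambda1 r1 r2 r3 L) (at_right (Lunder r1 r2 r3))"
      unfolding eventually_at_filter using Lu0 lam by (intro always_eventually) auto
    ultimately show ?thesis by (rule Lim_transform_eventually)
  qed
  show "lambda1 r1 r2 r3 (pi / 2 * sqrt ((2 * r2 - r1 - r3) / ((r2 - r1) * (r2 - r3))))
           = - (r2\<^sup>2 - r1 * r3) / (2 * r2 - r1 - r3)"
  proof -
    define m where "m = (r2\<^sup>2 - r1 * r3) / (2 * r2 - r1 - r3)"
    define Ls where "Ls = pi / 2 * sqrt ((2 * r2 - r1 - r3) / ((r2 - r1) * (r2 - r3)))"
    have sp: "max r1 r3 < m" "m < r2" "Lf r1 r2 r3 m = Ls" using special[OF A] by (simp_all add: m_def Ls_def)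
    have "Lf r1 r2 r3 (max r1 r3) < Lf r1 r2 r3 m" using Lf_strict[OF A, of "max r1 r3" m] sp by simp
    hence Lu: "Ls > Lunder r1 r2 r3" using Lunder_eq[OF A] sp by simp
    have p: "max r1 r3 < mstar r1 r2 r3 Ls" "mstar r1 r2 r3 Ls < r2" "Lf r1 r2 r3 (mstar r1 r2 r3 Ls) = Ls"
      using mstar_prop[OF A Lu] by auto
    have "mstar r1 r2 r3 Ls = m"
    proof (rule ccontr)
      assume "mstar r1 r2 r3 Ls \<noteq> m"
      hence "mstar r1 r2 r3 Ls < m \<or> m < mstar r1 r2 r3 Ls" by auto
      thus False using Lf_strict[OF A, of "mstar r1 r2 r3 Ls" m] Lf_strict[OF A, of m "mstar r1 r2 r3 Ls"] p sp
        by auto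
    qed
    moreover have "Ls > 0" using Lu Lu0 by simp
    ultimately have "lambda1 r1 r2 r3 Ls = - m" using lam by simp
    thus ?thesis by (simp add: Ls_def m_def minus_divide_left)
  qed
  show "(lambda1 r1 r2 r3 \<longlongrightarrow> - r2) at_top"
    unfolding tendsto_iff
  proof (intro allI impI)
    fix e :: real assume e: "e > 0"
    define M where "M = max r1 r3"
    have MB: "M < r2" using A by (simp add: M_def)
    define m1 where "m1 = max (r2 - e/2) ((M + r2) / 2)"
    have m1: "M < m1" "m1 < r2" "r2 - e/2 \<le> m1" using MB e by (auto simp: m1_def max_def field_simps)
    show "eventually (\<lambda>L. dist (lambda1 r1 r2 r3 L) (- r2) < e) at_top"
      unfolding eventually_at_top_linorder
    proof (intro exI[of _ "max (Lf r1 r2 r3 m1) (Lunder r1 r2 r3) + 1"] allI impI)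
      fix L assume L: "L \<ge> max (Lf r1 r2 r3 m1) (Lunder r1 r2 r3) + 1"
      have Lu: "L > Lunder r1 r2 r3" using L by simp
      have Lp: "L > 0" using Lu Lu0 by simp
      have "\<not> L \<le> Lf r1 r2 r3 m1" using L by simp
      hence "\<not> mstar r1 r2 r3 L \<le> m1" using mstar_less_iff[OF A _ m1(2) Lu] m1 by (simp add: M_def)
      moreover have "mstar r1 r2 r3 L < r2" by (rule mstar_bounds(2)[OF A])
      ultimately show "dist (lambda1 r1 r2 r3 L) (- r2) < e" using lam[OF Lp] m1 e
        by (simp add: dist_real_def abs_less_iff)
    qed
  qed
qed


end
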